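(* Let $r,K,\alpha,\phi,c,m_1,m_2,\lambda,a,d,\delta,\gamma,\sigma,\eta$ be positive constants with $\phi<1$ and $m_1>m_2$, and consider the system \[ \begin{cases} \dot X = rX\left(1-\frac{X}{K}\right)-\frac{\alpha XS}{c+X}-\frac{\phi\alpha XI}{c+X},\\[1mm] \dot S = \frac{m_1\alpha XS}{c+X}-\frac{\lambda AS}{a+A}-dS,\\[1mm] \dot I = \frac{m_2\phi\alpha XI}{c+X}+\frac{\lambda AS}{a+A}-(d+\delta)I,\\[1mm] \dot A = \gamma+\sigma(S+I)-\eta A. \end{cases} \] The pest-free equilibrium $E_1=(K,0,0,\gamma/\eta)$ is (locally) stable if \[ \frac{m_1\alpha K}{c+K}<\frac{\lambda\gamma}{a\eta+\gamma}+d\quad\text{and}\quad \frac{m_2\phi\alpha K}{c+K}<d+\delta, \] and unstable if \[ \frac{m_1\alpha K}{c+K}>\frac{\lambda\gamma}{a\eta+\gamma}+d\quad\text{or}\quad \frac{m_2\phi\alpha K}{c+K}>d+\delta. \] *)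

theory Defs
  imports "HOL-Analysis.Analysis"
begin

definition is_solution_on :: "('a::real_normed_vector \<Rightarrow> 'a) \<Rightarrow> (real \<Rightarrow> 'a) \<Rightarrow> real \<Rightarrow> bool" where
  "is_solution_on F x T \<longleftrightarrow>
     (\<forall>t\<in>{0..T}. (x has_vector_derivative F (x t)) (at t within {0..T}))"

definition lyapunov_stable :: "('a::real_normed_vector \<Rightarrow> 'a) \<Rightarrow> 'a \<Rightarrow> bool" where
  "lyapunov_stable F e \<longleftrightarrow>
     (\<forall>\<epsilon>>0. \<exists>\<delta>>0. \<forall>x T. T \<ge> 0 \<and> is_solution_on F x T \<and> dist (x 0) e < \<delta>
        \<longrightarrow> (\<forall>t\<in>{0..T}. dist (x t) e < \<epsilon>))"

definition locally_attracting :: "('a::real_normed_vector \<Rightarrow> 'a) \<Rightarrow> 'a \<Rightarrow> bool" where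
  "locally_attracting F e \<longleftrightarrow>
     (\<exists>\<delta>>0. \<forall>x. (\<forall>T\<ge>0. is_solution_on F x T) \<and> dist (x 0) e < \<delta>
        \<longrightarrow> (x \<longlongrightarrow> e) at_top)"

definition locally_asymptotically_stable :: "('a::real_normed_vector \<Rightarrow> 'a) \<Rightarrow> 'a \<Rightarrow> bool" where
  "locally_asymptotically_stable F e \<longleftrightarrow> lyapunov_stable F e \<and> locally_attracting F e"

definition unstable_equilibrium :: "('a::real_normed_vector \<Rightarrow> 'a) \<Rightarrow> 'a \<Rightarrow> bool" where
  "unstable_equilibrium F e \<longleftrightarrow> \<not> lyapunov_stable F e"

definition pest_field ::
  "real \<Rightarrow> real \<Rightarrow> real \<Rightarrow> real \<Rightarrow> real \<Rightarrow> real \<Rightarrow> real \<Rightarrow> real \<Rightarrow> real \<Rightarrow> real \<Rightarrow> real \<Rightarrow> real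
   \<Rightarrow> real \<Rightarrow> real \<Rightarrow> real^4 \<Rightarrow> real^4" where
  "pest_field r K \<alpha> \<phi> c m1 m2 lam a d \<delta> \<gamma> \<sigma> \<eta> u =
     (let X = u$1; S = u$2; I = u$3; A = u$4 in
      vector [ r * X * (1 - X / K) - \<alpha> * X * S / (c + X) - \<phi> * \<alpha> * X * I / (c + X),
               m1 * \<alpha> * X * S / (c + X) - lam * A * S / (a + A) - d * S,
               m2 * \<phi> * \<alpha> * X * I / (c + X) + lam * A * S / (a + A) - (d + \<delta>) * I,
               \<gamma> + \<sigma> * (S + I) - \<eta> * A ])"

end

theory Submission
  imports Defs
begin

lemma picard_local:
  fixes G :: "'a::euclidean_space \<Rightarrow> 'a"
  assumes lip: "L-lipschitz_on UNIV G" and h: "h > 0" "h * L < 1"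
  shows "\<exists>x. x 0 = q \<and> (\<forall>t\<in>{0..h}. (x has_vector_derivative G (x t)) (at t within {0..h}))"
proof -
  have L0: "L \<ge> 0" using lipschitz_on_nonneg[OF lip] .
  have contG: "continuous_on UNIV G" using lipschitz_on_continuous_on[OF lip] .
  define cl where "cl t = max 0 (min h t)" for t :: real
  have cl_in: "cl t \<in> {0..h}" for t using h by (auto simp: cl_def)
  have cl_id: "t \<in> {0..h} \<Longrightarrow> cl t = t" for t by (auto simp: cl_def)
  have cl_cont: "continuous_on UNIV cl" unfolding cl_def by (intro continuous_intros)
  define g where "g x t = q + integral {0..cl t} (\<lambda>s. G (apply_bcontfun x s))" for x :: "real \<Rightarrow>\<^sub>C 'a" and t
  have contGx: "continuous_on S (\<lambda>s. G (apply_bcontfun x s))" for x :: "real \<Rightarrow>\<^sub>C 'a" and S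
    by (rule continuous_on_compose2[OF contG]) auto
  have intx: "(\<lambda>s. G (apply_bcontfun x s)) integrable_on {0..u}" for x :: "real \<Rightarrow>\<^sub>C 'a" and u
    by (rule integrable_continuous_real[OF contGx])
  have gb: "g x \<in> bcontfun" for x
  proof -
    define k where "k u = q + integral {0..u} (\<lambda>s. G (apply_bcontfun x s))" for u
    have kc: "continuous_on {0..h} k" unfolding k_def
      by (intro continuous_intros indefinite_integral_continuous_1 intx)
    have geq: "g x = k \<circ> cl" by (auto simp: g_def k_def fun_eq_iff)
    have "continuous_on UNIV (k \<circ> cl)"
      by (rule continuous_on_compose[OF cl_cont continuous_on_subset[OF kc]]) (use cl_in in auto)
    moreover have "range (k \<circ> cl) \<subseteq> k ` {0..h}" using cl_in by auto
    moreover have "bounded (k ` {0..h})"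
      by (rule compact_imp_bounded[OF compact_continuous_image[OF kc]]) auto
    ultimately show ?thesis unfolding geq bcontfun_def using bounded_subset by blast
  qed
  define P where "P x = Bcontfun (g x)" for x
  have Pap: "apply_bcontfun (P x) = g x" for x unfolding P_def using gb Bcontfun_inverse by blast
  have contr: "dist (P x) (P y) \<le> (h * L) * dist x y" for x y
  proof (rule dist_bound)
    fix t
    have "dist (P x t) (P y t) = norm (integral {0..cl t} (\<lambda>s. G (apply_bcontfun x s)) - integral {0..cl t} (\<lambda>s. G (apply_bcontfun y s)))"
      by (simp add: Pap g_def dist_norm)
    also have "\<dots> = norm (integral {0..cl t} (\<lambda>s. G (apply_bcontfun x s) - G (apply_bcontfun y s)))"
      by (simp add: integral_diff intx)
    also have "\<dots> \<le> integral {0..cl t} (\<lambda>s. L * dist x y)"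
    proof (rule integral_norm_bound_integral)
      show "(\<lambda>s. G (apply_bcontfun x s) - G (apply_bcontfun y s)) integrable_on {0..cl t}"
        by (intro integrable_diff intx)
      show "(\<lambda>s. L * dist x y) integrable_on {0..cl t}" by (intro integrable_continuous_real continuous_intros)
      fix s
      have "norm (G (apply_bcontfun x s) - G (apply_bcontfun y s)) \<le> L * dist (apply_bcontfun x s) (apply_bcontfun y s)"
        using lipschitz_onD[OF lip] by (simp add: dist_norm)
      also have "\<dots> \<le> L * dist x y" using dist_bounded[of x s y] L0 by (rule mult_left_mono)
      finally show "norm (G (apply_bcontfun x s) - G (apply_bcontfun y s)) \<le> L * dist x y" .
    qed
    also have "\<dots> = cl t * (L * dist x y)" using cl_in[of t] by simp
    also have "\<dots> \<le> h * (L * dist x y)"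
      using cl_in[of t] L0 by (intro mult_right_mono) auto
    finally show "dist (P x t) (P y t) \<le> h * L * dist x y" by simp
  qed
  obtain xs where xs: "P xs = xs"
    using banach_fix_type[of "h*L" P] contr h L0 by auto
  have xs_eq: "apply_bcontfun xs t = q + integral {0..t} (\<lambda>s. G (apply_bcontfun xs s))" if "t \<in> {0..h}" for t
  proof -
    have "apply_bcontfun xs t = g xs t" using arg_cong[OF xs, of apply_bcontfun] by (simp add: Pap)
    then show ?thesis using cl_id[OF that] by (simp add: g_def)
  qed
  show ?thesis
  proof (intro exI conjI ballI)
    show "apply_bcontfun xs 0 = q" using xs_eq[of 0] h by simp
    fix t assume t: "t \<in> {0..h}"
    have "((\<lambda>u. q + integral {0..u} (\<lambda>s. G (apply_bcontfun xs s))) has_vector_derivative G (apply_bcontfun xs t)) (at t within {0..h})"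
      using integral_has_vector_derivative[OF contGx t]
      by (intro derivative_eq_intros) auto
    then show "(apply_bcontfun xs has_vector_derivative G (apply_bcontfun xs t)) (at t within {0..h})"
      by (rule has_vector_derivative_transform[OF t xs_eq, rotated])
  qed
qed

lemma hvd_bot:
  assumes "at t within S = bot"
  shows "(f has_vector_derivative D) (at t within S)"
  using assms unfolding has_vector_derivative_def has_derivative_within
  by (simp add: bounded_linear_scaleR_left)

lemma hvd_Un:
  assumes "(f has_vector_derivative D) (at t within S)" "(f has_vector_derivative D) (at t within T)"
  shows "(f has_vector_derivative D) (at t within (S \<union> T))"
  using assms unfolding has_vector_derivative_def has_derivative_within Lim_within_Un by auto

lemma glue:
  fixes G :: "'a::real_normed_vector \<Rightarrow> 'a"
  assumes x: "\<forall>t\<in>{0..a}. (x has_vector_derivative G (x t)) (at t within {0..a})"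
    and y: "\<forall>t\<in>{0..h}. (y has_vector_derivative G (y t)) (at t within {0..h})"
    and y0: "y 0 = x a" and a: "a \<ge> 0" and h: "h \<ge> 0"
  defines "z \<equiv> (\<lambda>t. if t \<le> a then x t else y (t - a))"
  shows "\<forall>t\<in>{0..a+h}. (z has_vector_derivative G (z t)) (at t within {0..a+h})"
proof
  fix t assume t: "t \<in> {0..a+h}"
  have U: "{0..a+h} = {0..a} \<union> {a..a+h}" using a h by auto
  have d1: "(z has_vector_derivative G (z t)) (at t within {0..a})"
  proof (cases "t \<le> a")
    case True
    then have "t \<in> {0..a}" using t by auto
    then show ?thesis using x
      by (intro has_vector_derivative_transform[of t "{0..a}" z x]) (auto simp: z_def True)
  next
    case False
    then have "at t within {0..a} = bot" by (subst at_within_eq_bot_iff) (auto dest: closure_mono[of "{0..a} - {t}" "{0..a}", THEN subsetD])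
    then show ?thesis by (rule hvd_bot)
  qed
  have d2: "(z has_vector_derivative G (z t)) (at t within {a..a+h})"
  proof (cases "t \<ge> a")
    case True
    then have ta: "t - a \<in> {0..h}" using t by auto
    have yd: "(y has_vector_derivative G (y (t - a))) (at (t - a) within {0..h})" using y ta by auto
    have "((\<lambda>s. y (s - a)) has_vector_derivative G (y (t - a))) (at t within {a..a+h})"
    proof -
      have e: "((\<lambda>s. s - a) has_vector_derivative 1) (at t within {a..a+h})"
        by (auto intro!: derivative_eq_intros)
      have im: "(\<lambda>s. s - a) ` {a..a+h} = {0..h}"
        by (auto simp: image_iff intro!: bexI[where x="_ + a"])
      have "((y \<circ> (\<lambda>s. s - a)) has_vector_derivative 1 *\<^sub>R G (y (t - a))) (at t within {a..a+h})"
        using vector_diff_chain_within[OF e, of y] yd im by simp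
      then show ?thesis by (simp add: o_def)
    qed
    moreover have "z t = y (t - a)" using True y0 by (auto simp: z_def)
    ultimately show ?thesis using True t
      by (intro has_vector_derivative_transform[of t "{a..a+h}" z "\<lambda>s. y (s - a)"])
         (auto simp: z_def y0)
  next
    case False
    then have "at t within {a..a+h} = bot" by (subst at_within_eq_bot_iff) (auto dest: closure_mono[of "{a..a+h} - {t}" "{a..a+h}", THEN subsetD])
    then show ?thesis by (rule hvd_bot)
  qed
  show "(z has_vector_derivative G (z t)) (at t within {0..a+h})"
    unfolding U by (rule hvd_Un[OF d1 d2])
qed

lemma picard_global:
  fixes G :: "'a::euclidean_space \<Rightarrow> 'a"
  assumes lip: "L-lipschitz_on UNIV G" and T: "T \<ge> 0"
  shows "\<exists>x. x 0 = q \<and> is_solution_on G x T"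
proof -
  have L0: "L \<ge> 0" using lipschitz_on_nonneg[OF lip] .
  define h where "h = 1 / (2 * (L + 1))"
  have h0: "h > 0" using L0 by (simp add: h_def)
  have hL: "h * L < 1" using L0 by (simp add: h_def field_simps)
  have ind: "\<exists>x. x 0 = q \<and> (\<forall>t\<in>{0..real n * h}. (x has_vector_derivative G (x t)) (at t within {0..real n * h}))" for n
  proof (induction n)
    case 0
    have "at 0 within {0..0::real} = bot" by (simp add: at_within_eq_bot_iff)
    then show ?case by (intro exI[of _ "\<lambda>_. q"]) (auto simp: has_vector_derivative_def bounded_linear_scaleR_left)
  next
    case (Suc n)
    then obtain x where x0: "x 0 = q" and x: "\<forall>t\<in>{0..real n * h}. (x has_vector_derivative G (x t)) (at t within {0..real n * h})" by blast
    obtain y where y0: "y 0 = x (real n * h)" and y: "\<forall>t\<in>{0..h}. (y has_vector_derivative G (y t)) (at t within {0..h})"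
      using picard_local[OF lip h0 hL] by blast
    have "\<forall>t\<in>{0..real n * h + h}. ((\<lambda>t. if t \<le> real n * h then x t else y (t - real n * h)) has_vector_derivative
           G ((\<lambda>t. if t \<le> real n * h then x t else y (t - real n * h)) t)) (at t within {0..real n * h + h})"
      by (rule glue[OF x y y0]) (use h0 in auto)
    moreover have "real (Suc n) * h = real n * h + h" by (simp add: algebra_simps)
    ultimately show ?case using x0 h0
      by (intro exI[of _ "\<lambda>t. if t \<le> real n * h then x t else y (t - real n * h)"]) auto
  qed
  obtain n where n: "T / h \<le> real n" using real_arch_simple by blast
  then have Tn: "T \<le> real n * h" using h0 by (simp add: field_simps)
  obtain x where x0: "x 0 = q" and x: "\<forall>t\<in>{0..real n * h}. (x has_vector_derivative G (x t)) (at t within {0..real n * h})"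
    using ind by blast
  show ?thesis unfolding is_solution_on_def
    using Tn by (intro exI[of _ x] conjI x0 ballI has_vector_derivative_within_subset[OF x[rule_format]]) auto
qed

lemma vector_4 [simp]:
 "(vector [x,y,z,w] ::('a::zero)^4)$1 = x"
 "(vector [x,y,z,w] ::('a::zero)^4)$2 = y"
 "(vector [x,y,z,w] ::('a::zero)^4)$3 = z"
 "(vector [x,y,z,w] ::('a::zero)^4)$4 = w"
  unfolding vector_def by simp_all

definition good :: "(real^4) set \<Rightarrow> (real^4 \<Rightarrow> real) \<Rightarrow> bool" where
  "good U f \<longleftrightarrow> (\<exists>L B. L-lipschitz_on U f \<and> (\<forall>u\<in>U. \<bar>f u\<bar> \<le> B))"

lemma good_const: "good U (\<lambda>u. k)"
  unfolding good_def by (intro exI[of _ 0] exI[of _ "\<bar>k\<bar>"]) (auto intro: lipschitz_on_constant)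

lemma good_nth: assumes "bounded U" shows "good U (\<lambda>u. u $ i)"
proof -
  obtain B where B: "\<forall>u\<in>U. norm u \<le> B" using assms bounded_iff by blast
  have "1-lipschitz_on U (\<lambda>u. u $ i)"
    by (rule lipschitz_onI) (auto simp: dist_vec_nth_le)
  moreover have "\<forall>u\<in>U. \<bar>u $ i\<bar> \<le> B" using B component_le_norm_cart order_trans by (metis real_norm_def)
  ultimately show ?thesis unfolding good_def by blast
qed

lemma good_add: "good U f \<Longrightarrow> good U g \<Longrightarrow> good U (\<lambda>u. f u + g u)"
  unfolding good_def
proof (elim exE conjE)
  fix L1 B1 L2 B2 assume a: "L1-lipschitz_on U f" "\<forall>u\<in>U. \<bar>f u\<bar> \<le> B1" "L2-lipschitz_on U g" "\<forall>u\<in>U. \<bar>g u\<bar> \<le> B2"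
  have "(L1+L2)-lipschitz_on U (\<lambda>u. f u + g u)" by (rule lipschitz_on_add[OF a(1) a(3)])
  moreover have "\<forall>u\<in>U. \<bar>f u + g u\<bar> \<le> B1 + B2" using a(2,4) by (auto intro: abs_triangle_ineq[THEN order_trans] add_mono)
  ultimately show "\<exists>L B. L-lipschitz_on U (\<lambda>u. f u + g u) \<and> (\<forall>u\<in>U. \<bar>f u + g u\<bar> \<le> B)" by blast
qed

lemma good_minus: "good U f \<Longrightarrow> good U (\<lambda>u. - f u)"
  unfolding good_def by (auto intro: lipschitz_on_minus)

lemma good_diff: "good U f \<Longrightarrow> good U g \<Longrightarrow> good U (\<lambda>u. f u - g u)"
  using good_add[OF _ good_minus, of U f g] by simp

lemma good_mult: "good U f \<Longrightarrow> good U g \<Longrightarrow> good U (\<lambda>u. f u * g u)"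
  unfolding good_def
proof (elim exE conjE)
  fix L1 B1 L2 B2 assume a: "L1-lipschitz_on U f" "\<forall>u\<in>U. \<bar>f u\<bar> \<le> B1" "L2-lipschitz_on U g" "\<forall>u\<in>U. \<bar>g u\<bar> \<le> B2"
  have L1: "L1 \<ge> 0" "L2 \<ge> 0" using a lipschitz_on_nonneg by auto
  have "(\<bar>B1\<bar> * L2 + \<bar>B2\<bar> * L1)-lipschitz_on U (\<lambda>u. f u * g u)"
  proof (rule lipschitz_onI)
    fix u v assume uv: "u \<in> U" "v \<in> U"
    have "dist (f u * g u) (f v * g v) = \<bar>f u * (g u - g v) + g v * (f u - f v)\<bar>"
      by (simp add: dist_real_def algebra_simps)
    also have "\<dots> \<le> \<bar>f u\<bar> * \<bar>g u - g v\<bar> + \<bar>g v\<bar> * \<bar>f u - f v\<bar>"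
      by (metis abs_mult abs_triangle_ineq)
    also have "\<dots> \<le> \<bar>B1\<bar> * (L2 * dist u v) + \<bar>B2\<bar> * (L1 * dist u v)"
      using a uv lipschitz_onD[OF a(1) uv] lipschitz_onD[OF a(3) uv]
      by (intro add_mono mult_mono) (auto simp: dist_real_def)
    finally show "dist (f u * g u) (f v * g v) \<le> (\<bar>B1\<bar> * L2 + \<bar>B2\<bar> * L1) * dist u v"
      by (simp add: algebra_simps)
  qed (use L1 in auto)
  moreover have "\<forall>u\<in>U. \<bar>f u * g u\<bar> \<le> B1 * B2" using a(2,4) by (auto simp: abs_mult intro!: mult_mono order_trans[OF abs_ge_zero])
  ultimately show "\<exists>L B. L-lipschitz_on U (\<lambda>u. f u * g u) \<and> (\<forall>u\<in>U. \<bar>f u * g u\<bar> \<le> B)" by blast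
qed

lemma good_inv: assumes "good U g" "m > 0" "\<forall>u\<in>U. g u \<ge> m" shows "good U (\<lambda>u. 1 / g u)"
  using assms(1) unfolding good_def
proof (elim exE conjE)
  fix L B assume a: "L-lipschitz_on U g" "\<forall>u\<in>U. \<bar>g u\<bar> \<le> B"
  have L0: "L \<ge> 0" using a lipschitz_on_nonneg by auto
  have "(L / m^2)-lipschitz_on U (\<lambda>u. 1 / g u)"
  proof (rule lipschitz_onI)
    fix u v assume uv: "u \<in> U" "v \<in> U"
    have gu: "g u \<ge> m" "g v \<ge> m" using assms uv by auto
    have "dist (1 / g u) (1 / g v) = \<bar>g v - g u\<bar> / (g u * g v)"
      using gu assms(2) by (simp add: dist_real_def field_simps abs_div)
    also have "\<dots> \<le> (L * dist u v) / (m * m)"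
      using gu assms(2) lipschitz_onD[OF a(1) uv]
      by (intro frac_le mult_mono) (auto simp: dist_real_def abs_minus_commute)
    finally show "dist (1 / g u) (1 / g v) \<le> L / m^2 * dist u v" by (simp add: power2_eq_square)
  qed (use L0 assms in auto)
  moreover have "\<forall>u\<in>U. \<bar>1 / g u\<bar> \<le> 1 / m" using assms by (auto simp: field_simps)
  ultimately show "\<exists>L B. L-lipschitz_on U (\<lambda>u. 1 / g u) \<and> (\<forall>u\<in>U. \<bar>1 / g u\<bar> \<le> B)" by blast
qed

lemma good_div: assumes "good U f" "good U g" "m > 0" "\<forall>u\<in>U. g u \<ge> m" shows "good U (\<lambda>u. f u / g u)"
  using good_mult[OF assms(1) good_inv[OF assms(2-4)]] by simp

lemma vec_lipschitz:
  fixes F :: "real^4 \<Rightarrow> real^4"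
  assumes "\<And>i. good U (\<lambda>u. F u $ i)"
  shows "\<exists>L M. L-lipschitz_on U F \<and> (\<forall>u\<in>U. norm (F u) \<le> M)"
proof -
  have "\<exists>L B. L-lipschitz_on U (\<lambda>u. F u $ i) \<and> (\<forall>u\<in>U. \<bar>F u $ i\<bar> \<le> B)" for i
    using assms[of i] unfolding good_def by blast
  then obtain L B where LB: "\<And>i. (L i)-lipschitz_on U (\<lambda>u. F u $ i)" "\<And>i u. u \<in> U \<Longrightarrow> \<bar>F u $ i\<bar> \<le> B i"
    by metis
  have "(\<Sum>i\<in>UNIV. L i)-lipschitz_on U F"
  proof (rule lipschitz_onI)
    fix u v assume uv: "u \<in> U" "v \<in> U"
    have "dist (F u) (F v) \<le> (\<Sum>i\<in>UNIV. \<bar>(F u - F v) $ i\<bar>)" unfolding dist_norm by (rule norm_le_l1_cart)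
    also have "\<dots> \<le> (\<Sum>i\<in>UNIV. L i * dist u v)"
      using lipschitz_onD[OF LB(1) uv] by (intro sum_mono) (auto simp: dist_real_def)
    finally show "dist (F u) (F v) \<le> (\<Sum>i\<in>UNIV. L i) * dist u v" by (simp add: sum_distrib_right)
  qed (intro sum_nonneg, use LB lipschitz_on_nonneg in blast)
  moreover have "\<forall>u\<in>U. norm (F u) \<le> (\<Sum>i\<in>UNIV. B i)"
  proof
    fix u assume "u \<in> U"
    then show "norm (F u) \<le> (\<Sum>i\<in>UNIV. B i)"
      using norm_le_l1_cart[of "F u"] LB(2) by (meson order_trans sum_mono)
  qed
  ultimately show ?thesis by blast
qed

lemma pest_comp:
  "pest_field r K \<alpha> \<phi> c m1 m2 lam a d \<delta> \<gamma> \<sigma> \<eta> u $ 1 = r * u$1 * (1 - u$1 / K) - \<alpha> * u$1 * u$2 / (c + u$1) - \<phi> * \<alpha> * u$1 * u$3 / (c + u$1)"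
  "pest_field r K \<alpha> \<phi> c m1 m2 lam a d \<delta> \<gamma> \<sigma> \<eta> u $ 2 = m1 * \<alpha> * u$1 * u$2 / (c + u$1) - lam * u$4 * u$2 / (a + u$4) - d * u$2"
  "pest_field r K \<alpha> \<phi> c m1 m2 lam a d \<delta> \<gamma> \<sigma> \<eta> u $ 3 = m2 * \<phi> * \<alpha> * u$1 * u$3 / (c + u$1) + lam * u$4 * u$2 / (a + u$4) - (d + \<delta>) * u$3"
  "pest_field r K \<alpha> \<phi> c m1 m2 lam a d \<delta> \<gamma> \<sigma> \<eta> u $ 4 = \<gamma> + \<sigma> * (u$2 + u$3) - \<eta> * u$4"
  by (simp_all add: pest_field_def Let_def)

lemmas good_intros = good_const good_nth good_add good_diff good_mult

lemma pest_lipschitz: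
  assumes "bounded U" "\<forall>u\<in>U. u$1 \<ge> 0 \<and> u$4 \<ge> 0" "c > 0" "a > 0"
  shows "\<exists>L M. L-lipschitz_on U (pest_field r K \<alpha> \<phi> c m1 m2 lam a d \<delta> \<gamma> \<sigma> \<eta>) \<and>
           (\<forall>u\<in>U. norm (pest_field r K \<alpha> \<phi> c m1 m2 lam a d \<delta> \<gamma> \<sigma> \<eta> u) \<le> M)"
proof (rule vec_lipschitz)
  fix i :: 4
  have gc: "good U (\<lambda>u. c + u$1)" by (intro good_intros assms)
  have ga: "good U (\<lambda>u. a + u$4)" by (intro good_intros assms)
  have pc: "\<forall>u\<in>U. c + u$1 \<ge> c" "\<forall>u\<in>U. a + u$4 \<ge> a" using assms by auto
  have d1: "good U (\<lambda>u. f u / (c + u$1))" if "good U f" for f by (rule good_div[OF that gc assms(3) pc(1)])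
  have d2: "good U (\<lambda>u. f u / (a + u$4))" if "good U f" for f by (rule good_div[OF that ga assms(4) pc(2)])
  have d3: "good U (\<lambda>u. f u / K)" if "good U f" for f
    using good_mult[OF that good_const[of U "1/K"]] by simp
  show "good U (\<lambda>u. pest_field r K \<alpha> \<phi> c m1 m2 lam a d \<delta> \<gamma> \<sigma> \<eta> u $ i)"
    using exhaust_4[of i]
    by (elim disjE) (simp_all only: pest_comp, (intro good_intros d1 d2 d3 assms)+)
qed

lemma exp_compare_ge:
  fixes w :: "real \<Rightarrow> real"
  assumes d: "\<forall>t\<in>{0..T}. (w has_real_derivative w' t) (at t within {0..T})"
    and ge: "\<forall>t\<in>{0..T}. w' t \<ge> k * w t" and t: "t \<in> {0..T}"
  shows "w t \<ge> w 0 * exp (k * t)"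
proof -
  define p where "p s = w s * exp (- k * s)" for s
  have dp: "(p has_real_derivative (w' s - k * w s) * exp (- k * s)) (at s within {0..T})" if "s \<in> {0..T}" for s
    unfolding p_def using d that
    by (auto intro!: derivative_eq_intros simp: algebra_simps)
  have cont: "continuous_on {0..t} p"
  proof -
    have "continuous_on {0..T} p"
      unfolding continuous_on_eq_continuous_within using dp DERIV_continuous by blast
    then show ?thesis by (rule continuous_on_subset) (use t in auto)
  qed
  have "p 0 \<le> p t"
  proof (rule DERIV_nonneg_imp_increasing_open[of 0 t p])
    show "0 \<le> t" using t by auto
    fix x assume x: "0 < x" "x < t"
    then have "at x within {0..T} = at x" using t by (intro at_within_Icc_at) auto
    then have "(p has_real_derivative (w' x - k * w x) * exp (- k * x)) (at x)"
      using dp[of x] x t by auto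
    moreover have "(w' x - k * w x) * exp (- k * x) \<ge> 0" using ge x t by auto
    ultimately show "\<exists>y. (p has_real_derivative y) (at x) \<and> 0 \<le> y" by blast
  qed (rule cont)
  then have "w 0 \<le> w t * exp (- k * t)" by (simp add: p_def)
  then have "w 0 * exp (k * t) \<le> w t * exp (- k * t) * exp (k * t)" by simp
  also have "\<dots> = w t" by (simp add: mult.assoc flip: exp_add)
  finally show ?thesis .
qed

lemma exp_compare_le:
  fixes w :: "real \<Rightarrow> real"
  assumes d: "\<forall>t\<in>{0..T}. (w has_real_derivative w' t) (at t within {0..T})"
    and le: "\<forall>t\<in>{0..T}. w' t \<le> k * w t" and t: "t \<in> {0..T}"
  shows "w t \<le> w 0 * exp (k * t)"
proof -
  have "- w t \<ge> - w 0 * exp (k * t)"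
  proof (rule exp_compare_ge[where w'="\<lambda>t. - w' t" and T=T])
    show "\<forall>t\<in>{0..T}. ((\<lambda>t. - w t) has_real_derivative - w' t) (at t within {0..T})"
      using d by (auto intro: DERIV_minus)
    show "\<forall>t\<in>{0..T}. k * - w t \<le> - w' t" using le by auto
  qed (rule t)
  then show ?thesis by simp
qed

lemma first_exit:
  fixes f :: "real \<Rightarrow> real"
  assumes cont: "continuous_on {0..T} f" and f0: "f 0 < e" and ex: "t \<in> {0..T}" "f t \<ge> e"
  shows "\<exists>t1\<in>{0..T}. f t1 = e \<and> (\<forall>s\<in>{0..t1}. f s \<le> e)"
proof -
  define A where "A = {0..T} \<inter> f -` {e..}"
  have "closed A" unfolding A_def by (intro continuous_closed_preimage cont) auto
  moreover have "bounded A" unfolding A_def by (rule bounded_subset[of "{0..T}"]) auto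
  ultimately have "compact A" using compact_eq_bounded_closed by blast
  moreover have "A \<noteq> {}" using ex by (auto simp: A_def)
  ultimately obtain t1 where t1: "t1 \<in> A" "\<forall>y\<in>A. t1 \<le> y" using compact_attains_inf by blast
  have t1T: "t1 \<in> {0..T}" "f t1 \<ge> e" using t1 by (auto simp: A_def)
  have below: "f s < e" if "s \<in> {0..T}" "s < t1" for s
  proof (rule ccontr)
    assume "\<not> f s < e"
    then have "s \<in> A" using that by (auto simp: A_def)
    then show False using t1(2) that(2) by auto
  qed
  have "\<exists>s\<ge>0. s \<le> t1 \<and> f s = e"
    by (rule IVT') (use f0 t1T in \<open>auto intro: continuous_on_subset[OF cont]\<close>)
  then obtain s where s: "0 \<le> s" "s \<le> t1" "f s = e" by blast
  have "s = t1"
  proof (rule ccontr)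
    assume "s \<noteq> t1"
    then have "s < t1" using s by auto
    moreover have "s \<in> {0..T}" using s t1T by auto
    ultimately show False using below s(3) by auto
  qed
  then have "f t1 = e" using s by simp
  moreover have "\<forall>s\<in>{0..t1}. f s \<le> e"
  proof
    fix s assume s: "s \<in> {0..t1}"
    show "f s \<le> e"
    proof (cases "s = t1")
      case True then show ?thesis using \<open>f t1 = e\<close> by simp
    next
      case False then have "s < t1" "s \<in> {0..T}" using s t1T by auto
      then show ?thesis using below by fastforce
    qed
  qed
  ultimately show ?thesis using t1T by blast
qed

lemma sol_cont:
  assumes "is_solution_on F x T"
  shows "continuous_on {0..T} x"
  using assms unfolding is_solution_on_def continuous_on_eq_continuous_within
  using has_vector_derivative_continuous by blast

lemma comp_deriv:
  assumes "(x has_vector_derivative x') (at t within S)"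
  shows "((\<lambda>t. x t $ i) has_real_derivative (x' $ i)) (at t within S)"
proof -
  have "((\<lambda>t. x t $ i) has_derivative (\<lambda>h. (h *\<^sub>R x') $ i)) (at t within S)"
    by (rule bounded_linear.has_derivative[OF bounded_linear_vec_nth assms[unfolded has_vector_derivative_def]])
  then show ?thesis unfolding has_field_derivative_def
    by (rule has_derivative_eq_rhs) (auto simp: fun_eq_iff)
qed

lemma sol_restrict:
  assumes "is_solution_on F x T" "T' \<le> T"
  shows "is_solution_on F x T'"
  unfolding is_solution_on_def
proof
  fix t assume t: "t \<in> {0..T'}"
  then have "t \<in> {0..T}" using assms(2) by auto
  then have "(x has_vector_derivative F (x t)) (at t within {0..T})" using assms(1) by (auto simp: is_solution_on_def)
  then show "(x has_vector_derivative F (x t)) (at t within {0..T'})"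
    by (rule has_vector_derivative_within_subset) (use assms(2) in auto)
qed

lemma dist4: "dist (u::real^4) v = sqrt ((u$1-v$1)^2 + (u$2-v$2)^2 + (u$3-v$3)^2 + (u$4-v$4)^2)"
  by (simp add: dist_vec_def L2_set_def sum_4 dist_real_def power2_abs)

lemma stable_long_solutions:
  fixes F :: "'a::euclidean_space \<Rightarrow> 'a"
  assumes st: "lyapunov_stable F E" and lip: "L-lipschitz_on (cball E R) F" and e: "0 < e" "e \<le> R"
  shows "\<exists>\<delta>>0. \<forall>p T. dist p E < \<delta> \<and> T \<ge> 0 \<longrightarrow>
            (\<exists>x. x 0 = p \<and> is_solution_on F x T \<and> (\<forall>t\<in>{0..T}. dist (x t) E < e))"
proof -
  obtain \<delta>0 where d0: "\<delta>0 > 0" and stab: "\<And>x T. T \<ge> 0 \<Longrightarrow> is_solution_on F x T \<Longrightarrow> dist (x 0) E < \<delta>0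
        \<Longrightarrow> \<forall>t\<in>{0..T}. dist (x t) E < e"
    using st e unfolding lyapunov_stable_def by meson
  define U where "U = cball E R"
  have R0: "R > 0" using e by auto
  have U: "convex U" "closed U" "U \<noteq> {}" using R0 by (auto simp: U_def)
  define cp where "cp = closest_point U"
  have cp_lip: "1-lipschitz_on UNIV cp"
    by (rule lipschitz_onI) (auto simp: cp_def closest_point_lipschitz[OF U])
  have cp_in: "cp ` UNIV \<subseteq> U" using closest_point_in_set[OF U(2,3)] by (auto simp: cp_def)
  have cp_self: "u \<in> U \<Longrightarrow> cp u = u" for u by (simp add: cp_def closest_point_self)
  define G where "G = F \<circ> cp"
  have Glip: "(L * 1)-lipschitz_on UNIV G"
    unfolding G_def by (rule lipschitz_on_compose[OF cp_lip lipschitz_on_subset[OF lip]]) (use cp_in U_def in auto)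
  show ?thesis
  proof (intro exI[of _ "min \<delta>0 e"] conjI allI impI)
    show "min \<delta>0 e > 0" using d0 e by auto
    fix p and T :: real assume pT: "dist p E < min \<delta>0 e \<and> T \<ge> 0"
    obtain x where x0: "x 0 = p" and xs: "is_solution_on G x T"
      using picard_global[OF Glip, of T p] pT by blast
    have xc: "continuous_on {0..T} x" by (rule sol_cont[OF xs])
    have inball: "\<forall>t\<in>{0..T}. dist (x t) E < e"
    proof (rule ccontr)
      assume "\<not> (\<forall>t\<in>{0..T}. dist (x t) E < e)"
      then obtain t where t: "t \<in> {0..T}" "dist (x t) E \<ge> e" by auto
      have dc: "continuous_on {0..T} (\<lambda>t. dist (x t) E)" by (intro continuous_intros xc)
      obtain t1 where t1: "t1 \<in> {0..T}" "dist (x t1) E = e" "\<forall>s\<in>{0..t1}. dist (x s) E \<le> e"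
        using first_exit[OF dc _ t] pT x0 by auto
      have "is_solution_on F x t1" unfolding is_solution_on_def
      proof
        fix s assume s: "s \<in> {0..t1}"
        then have sT: "s \<in> {0..T}" using t1 by auto
        have "dist (x s) E \<le> e" using t1(3) s by auto
        then have "x s \<in> U" using e by (auto simp: U_def dist_commute)
        then have "G (x s) = F (x s)" by (simp add: G_def cp_self)
        moreover have "(x has_vector_derivative G (x s)) (at s within {0..T})" using xs sT by (auto simp: is_solution_on_def)
        ultimately show "(x has_vector_derivative F (x s)) (at s within {0..t1})"
          using has_vector_derivative_within_subset t1(1) by fastforce
      qed
      then have "\<forall>t\<in>{0..t1}. dist (x t) E < e" using stab[of t1 x] t1 pT x0 by auto
      then show False using t1 by auto
    qed
    have "is_solution_on F x T" unfolding is_solution_on_def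
    proof
      fix s assume s: "s \<in> {0..T}"
      have "dist (x s) E < e" using inball s by auto
      then have "x s \<in> U" using e by (auto simp: U_def dist_commute)
      then have "G (x s) = F (x s)" by (simp add: G_def cp_self)
      moreover have "(x has_vector_derivative G (x s)) (at s within {0..T})" using xs s by (auto simp: is_solution_on_def)
      ultimately show "(x has_vector_derivative F (x s)) (at s within {0..T})" by simp
    qed
    then show "\<exists>x. x 0 = p \<and> is_solution_on F x T \<and> (\<forall>t\<in>{0..T}. dist (x t) E < e)"
      using x0 inball by blast
  qed
qed

lemma cont_lower:
  fixes h :: "'a::metric_space \<Rightarrow> real"
  assumes "isCont h E" "h E > m"
  shows "\<exists>d>0. \<forall>u. dist u E \<le> d \<longrightarrow> h u > m"
proof -
  have "\<forall>\<^sub>F u in at E. h u > m" using order_tendstoD(1)[OF assms(1)[unfolded isCont_def] assms(2)] .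
  then obtain d where d: "d > 0" "\<And>u. u \<noteq> E \<Longrightarrow> dist u E < d \<Longrightarrow> h u > m"
    unfolding eventually_at by blast
  show ?thesis
  proof (intro exI[of _ "d/2"] conjI allI impI)
    fix u assume u: "dist u E \<le> d / 2"
    show "h u > m"
    proof (cases "u = E")
      case True then show ?thesis using assms(2) by simp
    next
      case False then show ?thesis using d u by auto
    qed
  qed (use d in auto)
qed

lemma sq_deriv:
  assumes sol: "is_solution_on F x T"
  shows "\<forall>t\<in>{0..T}. ((\<lambda>t. (x t $ j)^2) has_real_derivative 2 * x t $ j * F (x t) $ j) (at t within {0..T})"
proof
  fix t assume t: "t \<in> {0..T}"
  have "((\<lambda>t. x t $ j) has_real_derivative F (x t) $ j) (at t within {0..T})"
    using sol t unfolding is_solution_on_def by (auto intro: comp_deriv)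
  then show "((\<lambda>t. (x t $ j)^2) has_real_derivative 2 * x t $ j * F (x t) $ j) (at t within {0..T})"
    by (auto intro!: derivative_eq_intros)
qed

lemma growth_contra:
  fixes x :: "real \<Rightarrow> real^'n"
  assumes sol: "is_solution_on F x T" and T: "T = e^2 / (q^2 * k)" and k: "k > 0" and q: "q \<noteq> 0"
    and x0: "x 0 $ j = q" and Ej: "E $ j = 0"
    and inb: "\<forall>t\<in>{0..T}. dist (x t) E < e"
    and grow: "\<forall>t\<in>{0..T}. 2 * x t $ j * F (x t) $ j \<ge> k * (x t $ j)^2"
  shows False
proof -
  have q2: "q^2 > 0" using q by simp
  have T0: "T \<ge> 0" using T k q2 by simp
  have "(x T $ j)^2 \<ge> (x 0 $ j)^2 * exp (k * T)"
    by (rule exp_compare_ge[OF sq_deriv[OF sol] grow]) (use T0 in auto)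
  moreover have "exp (k * T) \<ge> 1 + k * T" by (rule exp_ge_add_one_self)
  ultimately have "(x T $ j)^2 \<ge> q^2 * (1 + k * T)"
    using x0 q2 by (smt (verit) mult_left_mono)
  also have "q^2 * (1 + k * T) = q^2 + e^2" using T k q2 by (simp add: field_simps)
  finally have A: "(x T $ j)^2 \<ge> q^2 + e^2" .
  have "dist (x T $ j) (E $ j) \<le> dist (x T) E" by (rule dist_vec_nth_le)
  then have "\<bar>x T $ j\<bar> \<le> dist (x T) E" using Ej by (simp add: dist_real_def)
  moreover have "dist (x T) E < e" using inb T0 by auto
  ultimately have "\<bar>x T $ j\<bar> < e" by simp
  then have "(x T $ j)^2 < e^2"
    by (metis abs_ge_zero abs_power2 power2_abs power_strict_mono zero_less_numeral) 
  then show False using A q2 by simp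
qed

lemma zero_stays:
  fixes x :: "real \<Rightarrow> real^'n"
  assumes sol: "is_solution_on F x T" and x0: "x 0 $ j = 0"
    and le: "\<forall>t\<in>{0..T}. 2 * x t $ j * F (x t) $ j \<le> k * (x t $ j)^2"
  shows "\<forall>t\<in>{0..T}. x t $ j = 0"
proof
  fix t assume t: "t \<in> {0..T}"
  have "(x t $ j)^2 \<le> (x 0 $ j)^2 * exp (k * t)"
    by (rule exp_compare_le[OF sq_deriv[OF sol] le t])
  then show "x t $ j = 0" using x0 by simp
qed

lemma pest_unstable:
  fixes r K \<alpha> \<phi> c m1 m2 lam a d \<delta> \<gamma> \<sigma> \<eta> :: real
  assumes pos: "r > 0" "K > 0" "\<alpha> > 0" "\<phi> > 0" "c > 0" "m1 > 0" "m2 > 0" "lam > 0"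
               "a > 0" "d > 0" "\<delta> > 0" "\<gamma> > 0" "\<sigma> > 0" "\<eta> > 0"
    and cond: "m1 * \<alpha> * K / (c + K) > lam * \<gamma> / (a * \<eta> + \<gamma>) + d \<or> m2 * \<phi> * \<alpha> * K / (c + K) > d + \<delta>"
  shows "unstable_equilibrium (pest_field r K \<alpha> \<phi> c m1 m2 lam a d \<delta> \<gamma> \<sigma> \<eta>) (vector [K, 0, 0, \<gamma> / \<eta>] :: real^4)"
  unfolding unstable_equilibrium_def
proof
  define F where "F = pest_field r K \<alpha> \<phi> c m1 m2 lam a d \<delta> \<gamma> \<sigma> \<eta>"
  define E where "E = (vector [K, 0, 0, \<gamma> / \<eta>] :: real^4)"
  assume st: "lyapunov_stable (pest_field r K \<alpha> \<phi> c m1 m2 lam a d \<delta> \<gamma> \<sigma> \<eta>) (vector [K, 0, 0, \<gamma> / \<eta>])"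
  then have st: "lyapunov_stable F E" by (simp add: F_def E_def)
  define R0 where "R0 = min K (\<gamma> / \<eta>)"
  have R0: "R0 > 0" using pos by (simp add: R0_def)
  have Ec: "E $ 1 = K" "E $ 2 = 0" "E $ 3 = 0" "E $ 4 = \<gamma> / \<eta>" by (simp_all add: E_def)
  have compd: "\<bar>u $ i - E $ i\<bar> \<le> dist u E" for u i
  proof -
    have "dist (u$i) (E$i) \<le> dist u E" by (rule dist_vec_nth_le)
    then show ?thesis by (simp add: dist_real_def)
  qed
  have Upos: "\<forall>u\<in>cball E R0. u$1 \<ge> 0 \<and> u$4 \<ge> 0"
  proof
    fix u assume "u \<in> cball E R0"
    then have "dist u E \<le> R0" by (simp add: dist_commute)
    then have "\<bar>u $ 1 - K\<bar> \<le> R0" "\<bar>u $ 4 - \<gamma> / \<eta>\<bar> \<le> R0" using compd[of u 1] compd[of u 4] Ec by auto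
    then show "u$1 \<ge> 0 \<and> u$4 \<ge> 0" unfolding R0_def by auto
  qed
  obtain L M where lip: "L-lipschitz_on (cball E R0) F"
    using pest_lipschitz[OF bounded_cball Upos pos(5) pos(9)] unfolding F_def by blast
  define h2 where "h2 u = m1 * \<alpha> * u$1 / (c + u$1) - lam * u$4 / (a + u$4) - d" for u :: "real^4"
  define h3 where "h3 u = m2 * \<phi> * \<alpha> * u$1 / (c + u$1) - (d + \<delta>)" for u :: "real^4"
  have F2: "F u $ 2 = u$2 * h2 u" for u
    by (simp add: F_def pest_comp h2_def algebra_simps)
  have F3: "F u $ 3 = u$3 * h3 u + lam * u$4 * u$2 / (a + u$4)" for u
    by (simp add: F_def pest_comp h3_def algebra_simps)
  have h2E: "h2 E = m1 * \<alpha> * K / (c + K) - (lam * \<gamma> / (a * \<eta> + \<gamma>) + d)"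
    using pos by (simp add: h2_def Ec field_simps)
  have h3E: "h3 E = m2 * \<phi> * \<alpha> * K / (c + K) - (d + \<delta>)"
    by (simp add: h3_def Ec)
  have gp: "\<gamma> / \<eta> > 0" using pos by simp
  have den1: "c + E$1 \<noteq> 0" using pos Ec by auto
  have "a + \<gamma> / \<eta> > 0" using pos(9) gp by linarith
  then have den4: "a + E$4 \<noteq> 0" using Ec by auto
  have h2c: "isCont h2 E" unfolding h2_def
    by (intro continuous_intros den1 den4)
  have h3c: "isCont h3 E" unfolding h3_def
    by (intro continuous_intros den1)
  have inU: "u \<in> cball E R0" if "dist u E < e" "e \<le> R0" for u e
    using that by (simp add: dist_commute)
  from cond show False
  proof
    assume c1: "m1 * \<alpha> * K / (c + K) > lam * \<gamma> / (a * \<eta> + \<gamma>) + d"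
    define k where "k = m1 * \<alpha> * K / (c + K) - (lam * \<gamma> / (a * \<eta> + \<gamma>) + d)"
    have k: "k > 0" using c1 by (simp add: k_def)
    have "h2 E = k" using h2E by (simp add: k_def)
    then have "h2 E > k / 2" using k by linarith
    then obtain dA where dA: "dA > 0" "\<And>u. dist u E \<le> dA \<Longrightarrow> h2 u > k / 2"
      using cont_lower[OF h2c] by blast
    define e where "e = min dA R0"
    have e: "e > 0" "e \<le> R0" "e \<le> dA" using dA R0 by (auto simp: e_def)
    obtain \<delta>1 where d1: "\<delta>1 > 0" and sols: "\<And>p T. dist p E < \<delta>1 \<Longrightarrow> T \<ge> 0 \<Longrightarrow>
            (\<exists>x. x 0 = p \<and> is_solution_on F x T \<and> (\<forall>t\<in>{0..T}. dist (x t) E < e))"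
      using stable_long_solutions[OF st lip e(1,2)] by blast
    define p where "p = (vector [K, \<delta>1/2, 0, \<gamma> / \<eta>] :: real^4)"
    have "dist p E = \<delta>1 / 2" using d1 by (simp add: dist4 p_def E_def)
    then have pd: "dist p E < \<delta>1" using d1 by simp
    define T where "T = e^2 / ((\<delta>1/2)^2 * k)"
    have T0: "T \<ge> 0" using k by (simp add: T_def)
    obtain x where x0: "x 0 = p" and sol: "is_solution_on F x T" and inb: "\<forall>t\<in>{0..T}. dist (x t) E < e"
      using sols[OF pd T0] by blast
    show False
    proof (rule growth_contra[OF sol T_def k _ _ _ inb, of 2])
      show "\<delta>1 / 2 \<noteq> 0" using d1 by simp
      show "x 0 $ 2 = \<delta>1 / 2" by (simp add: x0 p_def)
      show "E $ 2 = 0" by (simp add: Ec)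
      show "\<forall>t\<in>{0..T}. k * (x t $ 2)\<^sup>2 \<le> 2 * x t $ 2 * F (x t) $ 2"
      proof
        fix t assume t: "t \<in> {0..T}"
        have "h2 (x t) > k / 2" using dA(2) inb t e by force
        then have "(x t $ 2)^2 * k \<le> (x t $ 2)^2 * (2 * h2 (x t))" by (intro mult_left_mono) auto
        then show "k * (x t $ 2)\<^sup>2 \<le> 2 * x t $ 2 * F (x t) $ 2" by (simp add: F2 power2_eq_square algebra_simps)
      qed
    qed
  next
    assume c2: "m2 * \<phi> * \<alpha> * K / (c + K) > d + \<delta>"
    define k where "k = m2 * \<phi> * \<alpha> * K / (c + K) - (d + \<delta>)"
    have k: "k > 0" using c2 by (simp add: k_def)
    have "h3 E = k" using h3E by (simp add: k_def)
    then have "h3 E > k / 2" using k by linarith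
    then obtain dA where dA: "dA > 0" "\<And>u. dist u E \<le> dA \<Longrightarrow> h3 u > k / 2"
      using cont_lower[OF h3c] by blast
    define e where "e = min dA R0"
    have e: "e > 0" "e \<le> R0" "e \<le> dA" using dA R0 by (auto simp: e_def)
    obtain \<delta>1 where d1: "\<delta>1 > 0" and sols: "\<And>p T. dist p E < \<delta>1 \<Longrightarrow> T \<ge> 0 \<Longrightarrow>
            (\<exists>x. x 0 = p \<and> is_solution_on F x T \<and> (\<forall>t\<in>{0..T}. dist (x t) E < e))"
      using stable_long_solutions[OF st lip e(1,2)] by blast
    define p where "p = (vector [K, 0, \<delta>1/2, \<gamma> / \<eta>] :: real^4)"
    have "dist p E = \<delta>1 / 2" using d1 by (simp add: dist4 p_def E_def)
    then have pd: "dist p E < \<delta>1" using d1 by simp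
    define T where "T = e^2 / ((\<delta>1/2)^2 * k)"
    have T0: "T \<ge> 0" using k by (simp add: T_def)
    obtain x where x0: "x 0 = p" and sol: "is_solution_on F x T" and inb: "\<forall>t\<in>{0..T}. dist (x t) E < e"
      using sols[OF pd T0] by blast
    have h2b: "h2 u \<le> m1 * \<alpha>" if "u \<in> cball E R0" for u
    proof -
      have u: "u$1 \<ge> 0" "u$4 \<ge> 0" using Upos that by auto
      have "m1 * \<alpha> * u$1 / (c + u$1) \<le> m1 * \<alpha>"
        using u pos by (simp add: field_simps)
      moreover have "lam * u$4 / (a + u$4) \<ge> 0" using u pos by simp
      ultimately show ?thesis using pos by (simp add: h2_def)
    qed
    have S0: "\<forall>t\<in>{0..T}. x t $ 2 = 0"
    proof (rule zero_stays[OF sol, where k = "2 * m1 * \<alpha>"])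
      show "x 0 $ 2 = 0" by (simp add: x0 p_def)
      show "\<forall>t\<in>{0..T}. 2 * x t $ 2 * F (x t) $ 2 \<le> 2 * m1 * \<alpha> * (x t $ 2)\<^sup>2"
      proof
        fix t assume t: "t \<in> {0..T}"
        have "h2 (x t) \<le> m1 * \<alpha>" using h2b inU inb t e by blast
        then have "(x t $ 2)^2 * (2 * h2 (x t)) \<le> (x t $ 2)^2 * (2 * m1 * \<alpha>)" by (intro mult_left_mono) auto
        then show "2 * x t $ 2 * F (x t) $ 2 \<le> 2 * m1 * \<alpha> * (x t $ 2)\<^sup>2" by (simp add: F2 power2_eq_square algebra_simps)
      qed
    qed
    show False
    proof (rule growth_contra[OF sol T_def k _ _ _ inb, of 3])
      show "\<delta>1 / 2 \<noteq> 0" using d1 by simp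
      show "x 0 $ 3 = \<delta>1 / 2" by (simp add: x0 p_def)
      show "E $ 3 = 0" by (simp add: Ec)
      show "\<forall>t\<in>{0..T}. k * (x t $ 3)\<^sup>2 \<le> 2 * x t $ 3 * F (x t) $ 3"
      proof
        fix t assume t: "t \<in> {0..T}"
        have "h3 (x t) > k / 2" using dA(2) inb t e by force
        then have "(x t $ 3)^2 * k \<le> (x t $ 3)^2 * (2 * h3 (x t))" by (intro mult_left_mono) auto
        then show "k * (x t $ 3)\<^sup>2 \<le> 2 * x t $ 3 * F (x t) $ 3" using S0 t by (simp add: F3 power2_eq_square algebra_simps)
      qed
    qed
  qed
qed

lemma amgm: fixes p b x y :: real assumes "p > 0"
  shows "b * x * y \<le> p / 4 * x^2 + b^2 / p * y^2"
proof -
  have "0 \<le> (p * x - 2 * b * y)^2 / (4 * p)" using assms by simp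
  also have "(p * x - 2 * b * y)^2 / (4 * p) = p / 4 * x^2 + b^2 / p * y^2 - b * x * y"
    using assms by (simp add: field_simps power2_eq_square)
  finally show ?thesis by simp
qed

lemma quad_bound:
  fixes r \<eta> \<sigma> s1 i1 b2 b3 l W2 W3 y1 y2 y3 y4 :: real
  assumes r: "r > 0" and eta: "\<eta> > 0" and s1: "s1 < 0" and i1: "i1 < 0"
    and W3: "W3 = 2 * (b3^2 / r + \<sigma>^2 / \<eta> + 1) / (- i1)"
    and W2: "W2 = (b2^2 / r + \<sigma>^2 / \<eta> + W3 * l^2 / (2 * (- i1)) + 1) / (- s1)"
  shows "y1 * (- r * y1 - b2 * y2 - b3 * y3) + W2 * s1 * y2^2 + W3 * (i1 * y3^2 + l * y2 * y3)
          + y4 * (\<sigma> * y2 + \<sigma> * y3 - \<eta> * y4)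
         \<le> - (r / 2) * y1^2 - y2^2 - y3^2 - (\<eta> / 2) * y4^2"
proof -
  have "b3^2 / r + \<sigma>^2 / \<eta> + 1 \<ge> 0" using r eta by (intro add_nonneg_nonneg) auto
  then have W3p: "W3 \<ge> 0" unfolding W3 using i1 by (intro divide_nonneg_pos) auto
  have A1: "(- b2) * y1 * y2 \<le> r / 4 * y1^2 + (- b2)^2 / r * y2^2" by (rule amgm[OF r])
  have A2: "(- b3) * y1 * y3 \<le> r / 4 * y1^2 + (- b3)^2 / r * y3^2" by (rule amgm[OF r])
  have A3: "\<sigma> * y4 * y2 \<le> \<eta> / 4 * y4^2 + \<sigma>^2 / \<eta> * y2^2" by (rule amgm[OF eta])
  have A4: "\<sigma> * y4 * y3 \<le> \<eta> / 4 * y4^2 + \<sigma>^2 / \<eta> * y3^2" by (rule amgm[OF eta])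
  have "l * y3 * y2 \<le> (2 * (- i1)) / 4 * y3^2 + l^2 / (2 * (- i1)) * y2^2" by (rule amgm) (use i1 in simp)
  then have "W3 * (l * y3 * y2) \<le> W3 * ((2 * (- i1)) / 4 * y3^2 + l^2 / (2 * (- i1)) * y2^2)"
    by (rule mult_left_mono[OF _ W3p])
  also have "\<dots> = W3 * ((- i1) / 2 * y3^2) + W3 * l^2 / (2 * (- i1)) * y2^2"
    by (simp add: algebra_simps)
  finally have A5: "W3 * (l * y2 * y3) \<le> W3 * ((- i1) / 2 * y3^2) + W3 * l^2 / (2 * (- i1)) * y2^2"
    by (simp add: algebra_simps)
  have w3i: "W3 * (- i1) = 2 * (b3^2 / r + \<sigma>^2 / \<eta> + 1)" unfolding W3 using i1 by simp
  have w2s: "W2 * (- s1) = b2^2 / r + \<sigma>^2 / \<eta> + W3 * l^2 / (2 * (- i1)) + 1" unfolding W2 using s1 by simp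
  have e1: "W3 * ((- i1) / 2 * y3^2) = (b3^2 / r + \<sigma>^2 / \<eta> + 1) * y3^2"
  proof -
    have "W3 * ((- i1) / 2 * y3^2) = (W3 * (- i1)) / 2 * y3^2" by (simp add: algebra_simps)
    then show ?thesis by (simp only: w3i; simp add: algebra_simps)
  qed
  have e3: "W3 * (i1 * y3^2) = - 2 * (b3^2 / r + \<sigma>^2 / \<eta> + 1) * y3^2"
  proof -
    have "W3 * (i1 * y3^2) = - (W3 * (- i1)) * y3^2" by (simp add: algebra_simps)
    then show ?thesis by (simp only: w3i; simp add: algebra_simps)
  qed
  have e2: "W2 * s1 * y2^2 = - (b2^2 / r + \<sigma>^2 / \<eta> + W3 * l^2 / (2 * (- i1)) + 1) * y2^2"
  proof -
    have "W2 * s1 * y2^2 = - (W2 * (- s1)) * y2^2" by (simp add: algebra_simps)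
    then show ?thesis by (simp only: w2s; simp add: algebra_simps)
  qed
  have expand: "y1 * (- r * y1 - b2 * y2 - b3 * y3) + W2 * s1 * y2^2 + W3 * (i1 * y3^2 + l * y2 * y3)
          + y4 * (\<sigma> * y2 + \<sigma> * y3 - \<eta> * y4)
        = - r * y1^2 + (- b2) * y1 * y2 + (- b3) * y1 * y3 + W2 * s1 * y2^2 + W3 * (i1 * y3^2) + W3 * (l * y2 * y3)
          + \<sigma> * y4 * y2 + \<sigma> * y4 * y3 - \<eta> * y4^2"
    by (simp add: algebra_simps power2_eq_square)
  show ?thesis unfolding expand using A1 A2 A3 A4 A5 e1 e2 e3 by (simp add: algebra_simps power2_eq_square)
qed

lemma L3: fixes w v u k \<rho> :: real
  assumes "\<bar>v\<bar> \<le> k * \<bar>w\<bar>" "\<bar>u\<bar> \<le> \<rho>" "0 \<le> k"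
  shows "\<bar>w * v * u\<bar> \<le> k * \<rho> * w^2"
proof -
  have "\<bar>w * v * u\<bar> = \<bar>w\<bar> * \<bar>v\<bar> * \<bar>u\<bar>" by (simp add: abs_mult)
  also have "\<dots> \<le> \<bar>w\<bar> * (k * \<bar>w\<bar>) * \<rho>"
    using assms by (intro mult_mono mult_left_mono) auto
  also have "\<dots> = k * \<rho> * w^2" by (simp add: power2_eq_square algebra_simps abs_mult_self_eq)
  finally show ?thesis .
qed

lemma coef_le: fixes k t :: real assumes "k \<ge> 0" "\<bar>t\<bar> \<le> B" shows "k * t \<le> k * B" "- (k * t) \<le> k * B"
proof -
  have "k * t \<le> k * \<bar>t\<bar>" using assms(1) by (auto intro: mult_left_mono)
  moreover have "k * (- t) \<le> k * \<bar>t\<bar>" by (rule mult_left_mono[OF _ assms(1)]) simp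
  then have "- (k * t) \<le> k * \<bar>t\<bar>" by simp
  moreover have "k * \<bar>t\<bar> \<le> k * B" using assms by (intro mult_left_mono)
  ultimately show "k * t \<le> k * B" "- (k * t) \<le> k * B" by auto
qed

lemma cubic_bound:
  fixes r K \<alpha> \<phi> c m1 m2 lam a W2 W3 \<rho> y1 y2 y3 y4 Dq Dp :: real
  assumes y: "\<bar>y1\<bar> \<le> \<rho>" "\<bar>y2\<bar> \<le> \<rho>" "\<bar>y3\<bar> \<le> \<rho>" "\<bar>y4\<bar> \<le> \<rho>"
    and Dq: "\<bar>Dq\<bar> \<le> (1 / c) * \<bar>y1\<bar>" and Dp: "\<bar>Dp\<bar> \<le> (1 / a) * \<bar>y4\<bar>"
    and pos: "c > 0" "a > 0" "r \<ge> 0" "K > 0" "\<alpha> \<ge> 0" "\<phi> \<ge> 0" "m1 \<ge> 0" "m2 \<ge> 0" "lam \<ge> 0" "W2 \<ge> 0" "W3 \<ge> 0"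
  defines "C \<equiv> (r / K + \<alpha> / c + \<phi> * \<alpha> / c) + (W2 * m1 * \<alpha> / c + W2 * lam / a + W3 * lam / a) + (W3 * m2 * \<phi> * \<alpha> / c + W3 * lam / a)"
  shows "y1 * (- r * y1^2 / K - \<alpha> * Dq * y2 - \<phi> * \<alpha> * Dq * y3) + W2 * y2^2 * (m1 * \<alpha> * Dq - lam * Dp)
          + W3 * (y3^2 * m2 * \<phi> * \<alpha> * Dq + lam * Dp * y2 * y3)
         \<le> \<rho> * C * (y1^2 + y2^2 + y3^2 + y4^2)"
proof -
  have r0: "\<rho> \<ge> 0" using y(1) by linarith
  have "(1 / c) * \<bar>y1\<bar> \<le> (1 / c) * \<rho>" using y(1) pos(1) by (intro mult_left_mono) auto
  then have Dqr: "\<bar>Dq\<bar> \<le> \<rho> / c" using Dq by simp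
  have "(1 / a) * \<bar>y4\<bar> \<le> (1 / a) * \<rho>" using y(4) pos(2) by (intro mult_left_mono) auto
  then have Dpr: "\<bar>Dp\<bar> \<le> \<rho> / a" using Dp by simp
  have t1: "\<bar>y1 * y1 * y1\<bar> \<le> 1 * \<rho> * y1^2" by (rule L3) (use y in auto)
  have t2: "\<bar>y1 * Dq * y2\<bar> \<le> (1 / c) * \<rho> * y1^2" by (rule L3) (use y Dq pos in auto)
  have t3: "\<bar>y1 * Dq * y3\<bar> \<le> (1 / c) * \<rho> * y1^2" by (rule L3) (use y Dq pos in auto)
  have t4: "\<bar>y2 * y2 * Dq\<bar> \<le> 1 * (\<rho> / c) * y2^2" by (rule L3) (use Dqr in auto)
  have t5: "\<bar>y2 * y2 * Dp\<bar> \<le> 1 * (\<rho> / a) * y2^2" by (rule L3) (use Dpr in auto)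
  have t6: "\<bar>y3 * y3 * Dq\<bar> \<le> 1 * (\<rho> / c) * y3^2" by (rule L3) (use Dqr in auto)
  have t7: "\<bar>Dp * y2 * y3\<bar> \<le> (\<rho> / a) * (y2^2 + y3^2)"
  proof -
    have "\<bar>Dp * y2 * y3\<bar> = \<bar>Dp\<bar> * \<bar>y2 * y3\<bar>" by (simp add: abs_mult)
    also have "\<dots> \<le> (\<rho> / a) * (y2^2 + y3^2)"
    proof (rule mult_mono)
      have "0 \<le> (\<bar>y2\<bar> - \<bar>y3\<bar>)^2" by simp
      then have "2 * (\<bar>y2\<bar> * \<bar>y3\<bar>) \<le> \<bar>y2\<bar>^2 + \<bar>y3\<bar>^2" by (simp add: power2_diff)
      moreover have "0 \<le> \<bar>y2\<bar> * \<bar>y3\<bar>" by simp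
      moreover have "\<bar>y2 * y3\<bar> = \<bar>y2\<bar> * \<bar>y3\<bar>" by (rule abs_mult)
      moreover have "\<bar>y2\<bar>^2 = y2^2" "\<bar>y3\<bar>^2 = y3^2" by simp_all
      ultimately show "\<bar>y2 * y3\<bar> \<le> y2^2 + y3^2" by linarith
    qed (use Dpr r0 pos in auto)
    finally show ?thesis .
  qed
  have N: "y1 * (- r * y1^2 / K - \<alpha> * Dq * y2 - \<phi> * \<alpha> * Dq * y3) + W2 * y2^2 * (m1 * \<alpha> * Dq - lam * Dp)
          + W3 * (y3^2 * m2 * \<phi> * \<alpha> * Dq + lam * Dp * y2 * y3)
        = - ((r / K) * (y1 * y1 * y1)) - (\<alpha> * (y1 * Dq * y2)) - ((\<phi> * \<alpha>) * (y1 * Dq * y3))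
          + (W2 * m1 * \<alpha>) * (y2 * y2 * Dq) - ((W2 * lam) * (y2 * y2 * Dp)) + (W3 * m2 * \<phi> * \<alpha>) * (y3 * y3 * Dq)
          + (W3 * lam) * (Dp * y2 * y3)"
    by (simp add: algebra_simps power2_eq_square)
  have k: "r / K \<ge> 0" "\<alpha> \<ge> 0" "\<phi> * \<alpha> \<ge> 0" "W2 * m1 * \<alpha> \<ge> 0" "W2 * lam \<ge> 0" "W3 * m2 * \<phi> * \<alpha> \<ge> 0" "W3 * lam \<ge> 0"
    using pos by auto
  note b1 = coef_le(2)[OF k(1) t1] and b2 = coef_le(2)[OF k(2) t2] and b3 = coef_le(2)[OF k(3) t3]
    and b4 = coef_le(1)[OF k(4) t4] and b5 = coef_le(2)[OF k(5) t5] and b6 = coef_le(1)[OF k(6) t6]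
    and b7 = coef_le(1)[OF k(7) t7]
  have sum: "- ((r / K) * (y1 * y1 * y1)) - (\<alpha> * (y1 * Dq * y2)) - ((\<phi> * \<alpha>) * (y1 * Dq * y3))
          + (W2 * m1 * \<alpha>) * (y2 * y2 * Dq) - ((W2 * lam) * (y2 * y2 * Dp)) + (W3 * m2 * \<phi> * \<alpha>) * (y3 * y3 * Dq)
          + (W3 * lam) * (Dp * y2 * y3)
        \<le> \<rho> * ((r / K + \<alpha> / c + \<phi> * \<alpha> / c) * y1^2 + (W2 * m1 * \<alpha> / c + W2 * lam / a + W3 * lam / a) * y2^2
               + (W3 * m2 * \<phi> * \<alpha> / c + W3 * lam / a) * y3^2)"
  proof -
    have eqR: "\<rho> * ((r / K + \<alpha> / c + \<phi> * \<alpha> / c) * y1^2 + (W2 * m1 * \<alpha> / c + W2 * lam / a + W3 * lam / a) * y2^2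
               + (W3 * m2 * \<phi> * \<alpha> / c + W3 * lam / a) * y3^2)
        = r / K * (1 * \<rho> * y1\<^sup>2) + \<alpha> * (1 / c * \<rho> * y1\<^sup>2) + \<phi> * \<alpha> * (1 / c * \<rho> * y1\<^sup>2)
          + W2 * m1 * \<alpha> * (1 * (\<rho> / c) * y2\<^sup>2) + W2 * lam * (1 * (\<rho> / a) * y2\<^sup>2)
          + W3 * m2 * \<phi> * \<alpha> * (1 * (\<rho> / c) * y3\<^sup>2) + W3 * lam * (\<rho> / a * (y2\<^sup>2 + y3\<^sup>2))"
      by (simp add: algebra_simps)
    show ?thesis unfolding eqR using b1 b2 b3 b4 b5 b6 b7 by linarith
  qed
  have c123: "r / K + \<alpha> / c + \<phi> * \<alpha> / c \<ge> 0" "W2 * m1 * \<alpha> / c + W2 * lam / a + W3 * lam / a \<ge> 0"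
     "W3 * m2 * \<phi> * \<alpha> / c + W3 * lam / a \<ge> 0" using pos by auto
  have S: "y1^2 \<le> y1^2 + y2^2 + y3^2 + y4^2" "y2^2 \<le> y1^2 + y2^2 + y3^2 + y4^2" "y3^2 \<le> y1^2 + y2^2 + y3^2 + y4^2"
    by auto
  have "(r / K + \<alpha> / c + \<phi> * \<alpha> / c) * y1^2 + (W2 * m1 * \<alpha> / c + W2 * lam / a + W3 * lam / a) * y2^2
               + (W3 * m2 * \<phi> * \<alpha> / c + W3 * lam / a) * y3^2 \<le> C * (y1^2 + y2^2 + y3^2 + y4^2)"
    unfolding C_def distrib_right
    by (intro add_mono mult_left_mono S) (use pos in auto)
  then have "\<rho> * ((r / K + \<alpha> / c + \<phi> * \<alpha> / c) * y1^2 + (W2 * m1 * \<alpha> / c + W2 * lam / a + W3 * lam / a) * y2^2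
               + (W3 * m2 * \<phi> * \<alpha> / c + W3 * lam / a) * y3^2) \<le> \<rho> * (C * (y1^2 + y2^2 + y3^2 + y4^2))"
    by (rule mult_left_mono[OF _ r0])
  then show ?thesis unfolding N using sum by (simp add: mult.assoc)
qed

lemma qdiff: fixes c X K :: real assumes "c > 0" "X \<ge> 0" "K \<ge> 0"
  shows "\<bar>X / (c + X) - K / (c + K)\<bar> \<le> (1 / c) * \<bar>X - K\<bar>"
proof -
  have p: "c + X > 0" "c + K > 0" using assms by auto
  have "X / (c + X) - K / (c + K) = c * (X - K) / ((c + X) * (c + K))"
    using p by (simp add: field_simps)
  then have "\<bar>X / (c + X) - K / (c + K)\<bar> = c * \<bar>X - K\<bar> / ((c + X) * (c + K))"
    using p assms by (simp add: abs_mult abs_div)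
  also have "\<dots> \<le> c * \<bar>X - K\<bar> / (c * c)"
    using p assms by (intro divide_left_mono mult_mono) auto
  also have "\<dots> = (1 / c) * \<bar>X - K\<bar>" using assms by (simp add: field_simps)
  finally show ?thesis .
qed

lemma lyap_pointwise:
  fixes r K \<alpha> \<phi> c m1 m2 lam a d \<delta> \<gamma> \<sigma> \<eta> :: real
  assumes pos: "r > 0" "K > 0" "\<alpha> > 0" "\<phi> > 0" "c > 0" "m1 > 0" "m2 > 0" "lam > 0"
               "a > 0" "d > 0" "\<delta> > 0" "\<gamma> > 0" "\<sigma> > 0" "\<eta> > 0"
    and c1: "m1 * \<alpha> * K / (c + K) < lam * \<gamma> / (a * \<eta> + \<gamma>) + d"
    and c2: "m2 * \<phi> * \<alpha> * K / (c + K) < d + \<delta>"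
  shows "\<exists>W2 W3 \<kappa> \<rho>. W2 > 0 \<and> W3 > 0 \<and> \<kappa> > 0 \<and> \<rho> > 0 \<and>
     (\<forall>X S I A. \<bar>X - K\<bar> \<le> \<rho> \<and> \<bar>S\<bar> \<le> \<rho> \<and> \<bar>I\<bar> \<le> \<rho> \<and> \<bar>A - \<gamma> / \<eta>\<bar> \<le> \<rho> \<longrightarrow>
        (X - K) * (r * X * (1 - X / K) - \<alpha> * X * S / (c + X) - \<phi> * \<alpha> * X * I / (c + X))
        + W2 * S * (m1 * \<alpha> * X * S / (c + X) - lam * A * S / (a + A) - d * S)
        + W3 * I * (m2 * \<phi> * \<alpha> * X * I / (c + X) + lam * A * S / (a + A) - (d + \<delta>) * I)
        + (A - \<gamma> / \<eta>) * (\<gamma> + \<sigma> * (S + I) - \<eta> * A)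
        \<le> - \<kappa> * ((X - K)^2 + S^2 + I^2 + (A - \<gamma> / \<eta>)^2))"
proof -
  define A0 where "A0 = \<gamma> / \<eta>"
  have A0: "A0 > 0" using pos by (simp add: A0_def)
  define q0 where "q0 = K / (c + K)"
  define p0 where "p0 = A0 / (a + A0)"
  define b2 where "b2 = \<alpha> * q0"
  define b3 where "b3 = \<phi> * \<alpha> * q0"
  define l where "l = lam * p0"
  define s1 where "s1 = m1 * \<alpha> * q0 - lam * p0 - d"
  define i1 where "i1 = m2 * \<phi> * \<alpha> * q0 - (d + \<delta>)"
  have "m1 * \<alpha> * K / (c + K) = m1 * \<alpha> * q0" by (simp add: q0_def)
  moreover have "lam * \<gamma> / (a * \<eta> + \<gamma>) = lam * p0" using pos by (simp add: p0_def A0_def field_simps)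
  ultimately have s1: "s1 < 0" using c1 by (simp add: s1_def)
  have i1: "i1 < 0" using c2 by (simp add: i1_def q0_def)
  define W3 where "W3 = 2 * (b3^2 / r + \<sigma>^2 / \<eta> + 1) / (- i1)"
  define W2 where "W2 = (b2^2 / r + \<sigma>^2 / \<eta> + W3 * l^2 / (2 * (- i1)) + 1) / (- s1)"
  have "b3^2 / r + \<sigma>^2 / \<eta> + 1 > 0" using pos by (intro add_nonneg_pos) auto
  then have W3p: "W3 > 0" unfolding W3_def using i1 by (intro divide_pos_pos) auto
  have "W3 * l^2 / (2 * (- i1)) \<ge> 0" using W3p i1 by (intro divide_nonneg_pos) auto
  then have "b2^2 / r + \<sigma>^2 / \<eta> + W3 * l^2 / (2 * (- i1)) + 1 > 0" using pos by (intro add_nonneg_pos add_nonneg_nonneg) auto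
  then have W2p: "W2 > 0" unfolding W2_def using s1 by (intro divide_pos_pos) auto
  define C where "C = (r / K + \<alpha> / c + \<phi> * \<alpha> / c) + (W2 * m1 * \<alpha> / c + W2 * lam / a + W3 * lam / a) + (W3 * m2 * \<phi> * \<alpha> / c + W3 * lam / a)"
  have C0: "C \<ge> 0" unfolding C_def using pos W2p W3p by (intro add_nonneg_nonneg) auto
  define \<kappa>0 where "\<kappa>0 = min (r / 2) (min (\<eta> / 2) 1)"
  have k0: "\<kappa>0 > 0" using pos by (simp add: \<kappa>0_def)
  define \<rho> where "\<rho> = min (min K A0) (\<kappa>0 / (2 * (C + 1)))"
  have rho: "\<rho> > 0" using pos A0 k0 C0 by (simp add: \<rho>_def)
  have rhoC: "\<rho> * C \<le> \<kappa>0 / 2"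
  proof -
    have "\<rho> * C \<le> \<kappa>0 / (2 * (C + 1)) * C" using C0 by (intro mult_right_mono) (auto simp: \<rho>_def)
    also have "\<dots> \<le> \<kappa>0 / (2 * (C + 1)) * (C + 1)" using C0 k0 by (intro mult_left_mono) auto
    also have "\<dots> = \<kappa>0 / 2" using C0 by (simp add: field_simps)
    finally show ?thesis .
  qed
  have kh: "\<kappa>0 / 2 > 0" using k0 by simp
  show ?thesis
  proof (rule exI[of _ W2], rule exI[of _ W3], rule exI[of _ "\<kappa>0 / 2"], rule exI[of _ \<rho>], intro conjI allI impI W2p W3p rho kh)
    fix X S I A
    assume B: "\<bar>X - K\<bar> \<le> \<rho> \<and> \<bar>S\<bar> \<le> \<rho> \<and> \<bar>I\<bar> \<le> \<rho> \<and> \<bar>A - \<gamma> / \<eta>\<bar> \<le> \<rho>"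
    define y1 where "y1 = X - K"
    define y4 where "y4 = A - A0"
    have yb: "\<bar>y1\<bar> \<le> \<rho>" "\<bar>S\<bar> \<le> \<rho>" "\<bar>I\<bar> \<le> \<rho>" "\<bar>y4\<bar> \<le> \<rho>" using B by (auto simp: y1_def y4_def A0_def)
    have X0: "X \<ge> 0" using yb(1) by (auto simp: y1_def \<rho>_def)
    have Ap: "A \<ge> 0" using yb(4) by (auto simp: y4_def \<rho>_def)
    define Dq where "Dq = X / (c + X) - q0"
    define Dp where "Dp = A / (a + A) - p0"
    have Dq: "\<bar>Dq\<bar> \<le> (1 / c) * \<bar>y1\<bar>" unfolding Dq_def q0_def y1_def using qdiff[OF pos(5) X0] pos by simp
    have Dp: "\<bar>Dp\<bar> \<le> (1 / a) * \<bar>y4\<bar>" unfolding Dp_def p0_def y4_def using qdiff[OF pos(9) Ap] A0 by simp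
    have cX: "c + X > 0" "a + A > 0" using X0 Ap pos by auto
    have f1: "r * X * (1 - X / K) - \<alpha> * X * S / (c + X) - \<phi> * \<alpha> * X * I / (c + X)
        = - r * y1 - r * y1^2 / K - b2 * S - b3 * I - \<alpha> * Dq * S - \<phi> * \<alpha> * Dq * I"
    proof -
      have "r * X * (1 - X / K) = - r * y1 - r * y1^2 / K" using pos by (simp add: y1_def field_simps power2_eq_square)
      moreover have "\<alpha> * X * S / (c + X) = b2 * S + \<alpha> * Dq * S" by (simp add: b2_def Dq_def algebra_simps)
      moreover have "\<phi> * \<alpha> * X * I / (c + X) = b3 * I + \<phi> * \<alpha> * Dq * I" by (simp add: b3_def Dq_def algebra_simps)
      ultimately show ?thesis by simp
    qed
    have f2: "m1 * \<alpha> * X * S / (c + X) - lam * A * S / (a + A) - d * S = S * s1 + S * (m1 * \<alpha> * Dq - lam * Dp)"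
      by (simp add: s1_def Dq_def Dp_def algebra_simps)
    have f3: "m2 * \<phi> * \<alpha> * X * I / (c + X) + lam * A * S / (a + A) - (d + \<delta>) * I
        = I * i1 + l * S + I * m2 * \<phi> * \<alpha> * Dq + lam * Dp * S"
      by (simp add: i1_def l_def Dq_def Dp_def algebra_simps)
    have f4: "\<gamma> + \<sigma> * (S + I) - \<eta> * A = \<sigma> * S + \<sigma> * I - \<eta> * y4"
      using pos by (simp add: y4_def A0_def algebra_simps)
    have split: "y1 * (- r * y1 - r * y1^2 / K - b2 * S - b3 * I - \<alpha> * Dq * S - \<phi> * \<alpha> * Dq * I)
        + W2 * S * (S * s1 + S * (m1 * \<alpha> * Dq - lam * Dp))
        + W3 * I * (I * i1 + l * S + I * m2 * \<phi> * \<alpha> * Dq + lam * Dp * S)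
        + y4 * (\<sigma> * S + \<sigma> * I - \<eta> * y4)
      = (y1 * (- r * y1 - b2 * S - b3 * I) + W2 * s1 * S^2 + W3 * (i1 * I^2 + l * S * I)
          + y4 * (\<sigma> * S + \<sigma> * I - \<eta> * y4))
        + (y1 * (- r * y1^2 / K - \<alpha> * Dq * S - \<phi> * \<alpha> * Dq * I) + W2 * S^2 * (m1 * \<alpha> * Dq - lam * Dp)
          + W3 * (I^2 * m2 * \<phi> * \<alpha> * Dq + lam * Dp * S * I))"
      by (simp add: algebra_simps power2_eq_square)
    have Q: "y1 * (- r * y1 - b2 * S - b3 * I) + W2 * s1 * S^2 + W3 * (i1 * I^2 + l * S * I)
          + y4 * (\<sigma> * S + \<sigma> * I - \<eta> * y4) \<le> - (r / 2) * y1^2 - S^2 - I^2 - (\<eta> / 2) * y4^2"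
      by (rule quad_bound[OF pos(1) pos(14) s1 i1 W3_def W2_def])
    have N: "y1 * (- r * y1^2 / K - \<alpha> * Dq * S - \<phi> * \<alpha> * Dq * I) + W2 * S^2 * (m1 * \<alpha> * Dq - lam * Dp)
          + W3 * (I^2 * m2 * \<phi> * \<alpha> * Dq + lam * Dp * S * I) \<le> \<rho> * C * (y1^2 + S^2 + I^2 + y4^2)"
      unfolding C_def by (rule cubic_bound[OF yb Dq Dp]) (use pos W2p W3p in auto)
    define SS where "SS = y1^2 + S^2 + I^2 + y4^2"
    have SS0: "SS \<ge> 0" by (simp add: SS_def)
    have "- (r / 2) * y1^2 - S^2 - I^2 - (\<eta> / 2) * y4^2 \<le> - \<kappa>0 * SS"
    proof -
      have "\<kappa>0 * y1^2 \<le> (r / 2) * y1^2" "\<kappa>0 * S^2 \<le> 1 * S^2" "\<kappa>0 * I^2 \<le> 1 * I^2" "\<kappa>0 * y4^2 \<le> (\<eta> / 2) * y4^2"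
        by (intro mult_right_mono; simp add: \<kappa>0_def)+
      then show ?thesis by (simp add: SS_def algebra_simps)
    qed
    moreover have "\<rho> * C * SS \<le> \<kappa>0 / 2 * SS" using rhoC SS0 by (intro mult_right_mono)
    ultimately have "(X - K) * (r * X * (1 - X / K) - \<alpha> * X * S / (c + X) - \<phi> * \<alpha> * X * I / (c + X))
        + W2 * S * (m1 * \<alpha> * X * S / (c + X) - lam * A * S / (a + A) - d * S)
        + W3 * I * (m2 * \<phi> * \<alpha> * X * I / (c + X) + lam * A * S / (a + A) - (d + \<delta>) * I)
        + (A - \<gamma> / \<eta>) * (\<gamma> + \<sigma> * (S + I) - \<eta> * A) \<le> - (\<kappa>0 / 2) * SS"
      unfolding f1 f2 f3 f4 using Q N split by (simp add: y1_def y4_def A0_def SS_def algebra_simps)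
    then show "(X - K) * (r * X * (1 - X / K) - \<alpha> * X * S / (c + X) - \<phi> * \<alpha> * X * I / (c + X))
        + W2 * S * (m1 * \<alpha> * X * S / (c + X) - lam * A * S / (a + A) - d * S)
        + W3 * I * (m2 * \<phi> * \<alpha> * X * I / (c + X) + lam * A * S / (a + A) - (d + \<delta>) * I)
        + (A - \<gamma> / \<eta>) * (\<gamma> + \<sigma> * (S + I) - \<eta> * A)
        \<le> - (\<kappa>0 / 2) * ((X - K)^2 + S^2 + I^2 + (A - \<gamma> / \<eta>)^2)"
      by (simp add: SS_def y1_def y4_def A0_def)
  qed
qed

lemma pest_stable:
  fixes r K \<alpha> \<phi> c m1 m2 lam a d \<delta> \<gamma> \<sigma> \<eta> :: real
  assumes pos: "r > 0" "K > 0" "\<alpha> > 0" "\<phi> > 0" "c > 0" "m1 > 0" "m2 > 0" "lam > 0"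
               "a > 0" "d > 0" "\<delta> > 0" "\<gamma> > 0" "\<sigma> > 0" "\<eta> > 0"
    and c1: "m1 * \<alpha> * K / (c + K) < lam * \<gamma> / (a * \<eta> + \<gamma>) + d"
    and c2: "m2 * \<phi> * \<alpha> * K / (c + K) < d + \<delta>"
  shows "locally_asymptotically_stable (pest_field r K \<alpha> \<phi> c m1 m2 lam a d \<delta> \<gamma> \<sigma> \<eta>) (vector [K, 0, 0, \<gamma> / \<eta>] :: real^4)"
proof -
  define F where "F = pest_field r K \<alpha> \<phi> c m1 m2 lam a d \<delta> \<gamma> \<sigma> \<eta>"
  define E where "E = (vector [K, 0, 0, \<gamma> / \<eta>] :: real^4)"
  define A0 where "A0 = \<gamma> / \<eta>"
  have Ec: "E $ 1 = K" "E $ 2 = 0" "E $ 3 = 0" "E $ 4 = A0" by (simp_all add: E_def A0_def)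
  obtain W2 W3 \<kappa> \<rho> where W: "W2 > 0" "W3 > 0" "\<kappa> > 0" "\<rho> > 0" and
    LP: "\<And>X S I A. \<bar>X - K\<bar> \<le> \<rho> \<Longrightarrow> \<bar>S\<bar> \<le> \<rho> \<Longrightarrow> \<bar>I\<bar> \<le> \<rho> \<Longrightarrow> \<bar>A - \<gamma> / \<eta>\<bar> \<le> \<rho> \<Longrightarrow>
        (X - K) * (r * X * (1 - X / K) - \<alpha> * X * S / (c + X) - \<phi> * \<alpha> * X * I / (c + X))
        + W2 * S * (m1 * \<alpha> * X * S / (c + X) - lam * A * S / (a + A) - d * S)
        + W3 * I * (m2 * \<phi> * \<alpha> * X * I / (c + X) + lam * A * S / (a + A) - (d + \<delta>) * I)
        + (A - \<gamma> / \<eta>) * (\<gamma> + \<sigma> * (S + I) - \<eta> * A)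
        \<le> - \<kappa> * ((X - K)^2 + S^2 + I^2 + (A - \<gamma> / \<eta>)^2)"
    using lyap_pointwise[OF pos c1 c2] by blast
  define V where "V u = (u$1 - K)^2 + W2 * (u$2)^2 + W3 * (u$3)^2 + (u$4 - A0)^2" for u :: "real^4"
  define Gf where "Gf u = (u$1 - K) * (F u $ 1) + W2 * u$2 * (F u $ 2) + W3 * u$3 * (F u $ 3) + (u$4 - A0) * (F u $ 4)" for u :: "real^4"
  define Wmin where "Wmin = min 1 (min W2 W3)"
  define Wmax where "Wmax = max 1 (max W2 W3)"
  have Wm: "Wmin > 0" "Wmax > 0" "Wmin \<le> Wmax" using W by (auto simp: Wmin_def Wmax_def)
  have dsq: "(dist u E)^2 = (u$1 - K)^2 + (u$2)^2 + (u$3)^2 + (u$4 - A0)^2" for u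
    by (simp add: dist4 Ec)
  have Vlow: "Wmin * (dist u E)^2 \<le> V u" for u
  proof -
    have "Wmin * (u$1 - K)^2 \<le> 1 * (u$1 - K)^2" "Wmin * (u$2)^2 \<le> W2 * (u$2)^2"
         "Wmin * (u$3)^2 \<le> W3 * (u$3)^2" "Wmin * (u$4 - A0)^2 \<le> 1 * (u$4 - A0)^2"
      by (intro mult_right_mono; simp add: Wmin_def)+
    then show ?thesis unfolding dsq V_def by (simp add: algebra_simps)
  qed
  have Vup: "V u \<le> Wmax * (dist u E)^2" for u
  proof -
    have "1 * (u$1 - K)^2 \<le> Wmax * (u$1 - K)^2" "W2 * (u$2)^2 \<le> Wmax * (u$2)^2"
         "W3 * (u$3)^2 \<le> Wmax * (u$3)^2" "1 * (u$4 - A0)^2 \<le> Wmax * (u$4 - A0)^2"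
      by (intro mult_right_mono; simp add: Wmax_def)+
    then show ?thesis unfolding dsq V_def by (simp add: algebra_simps)
  qed
  have compd: "\<bar>u $ i - E $ i\<bar> \<le> dist u E" for u i
  proof -
    have "dist (u$i) (E$i) \<le> dist u E" by (rule dist_vec_nth_le)
    then show ?thesis by (simp add: dist_real_def)
  qed
  have Gbound: "Gf u \<le> - \<kappa> * (dist u E)^2" if "dist u E \<le> \<rho>" for u
  proof -
    have b: "\<bar>u$1 - K\<bar> \<le> \<rho>" "\<bar>u$2\<bar> \<le> \<rho>" "\<bar>u$3\<bar> \<le> \<rho>" "\<bar>u$4 - \<gamma> / \<eta>\<bar> \<le> \<rho>"
      using compd[of u 1] compd[of u 2] compd[of u 3] compd[of u 4] that by (auto simp: Ec A0_def)
    show ?thesis using LP[OF b] unfolding Gf_def dsq F_def by (simp add: pest_comp A0_def)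
  qed
  have vderiv: "\<forall>t\<in>{0..T}. ((\<lambda>t. V (x t)) has_real_derivative 2 * Gf (x t)) (at t within {0..T})"
    if sol: "is_solution_on F x T" for x T
  proof
    fix t assume t: "t \<in> {0..T}"
    have d: "((\<lambda>t. x t $ i) has_real_derivative F (x t) $ i) (at t within {0..T})" for i
      using sol t unfolding is_solution_on_def by (auto intro: comp_deriv)
    show "((\<lambda>t. V (x t)) has_real_derivative 2 * Gf (x t)) (at t within {0..T})"
      unfolding V_def Gf_def
      by (rule derivative_eq_intros d refl | simp add: algebra_simps)+
  qed
  define k where "k = 2 * \<kappa> / Wmax"
  have kpos: "k > 0" using W Wm by (simp add: k_def)
  have vbound: "2 * Gf u \<le> - k * V u" if "dist u E \<le> \<rho>" for u
  proof -
    have "2 * Gf u \<le> - 2 * \<kappa> * (dist u E)^2" using Gbound[OF that] by simp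
    moreover have "k * V u \<le> 2 * \<kappa> * (dist u E)^2"
    proof -
      have "k * V u \<le> k * (Wmax * (dist u E)^2)" using Vup kpos by (intro mult_left_mono) auto
      also have "\<dots> = 2 * \<kappa> * (dist u E)^2" using Wm by (simp add: k_def)
      finally show ?thesis .
    qed
    ultimately show ?thesis by simp
  qed
  have V0: "V u \<ge> 0" for u using W by (simp add: V_def)
  have stab: "\<forall>t\<in>{0..T}. dist (x t) E < e"
    if e: "0 < e" "e \<le> \<rho>" and T: "T \<ge> 0" and sol: "is_solution_on F x T"
      and x0: "dist (x 0) E < e * Wmin / (2 * Wmax)" for e x T
  proof (rule ccontr)
    assume "\<not> (\<forall>t\<in>{0..T}. dist (x t) E < e)"
    then obtain t where t: "t \<in> {0..T}" "dist (x t) E \<ge> e" by auto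
    have dc: "continuous_on {0..T} (\<lambda>t. dist (x t) E)" by (intro continuous_intros sol_cont[OF sol])
    have "Wmin / (2 * Wmax) \<le> 1" using Wm by simp
    then have "e * (Wmin / (2 * Wmax)) \<le> e * 1" using e by (intro mult_left_mono) auto
    then have "e * Wmin / (2 * Wmax) \<le> e" by simp
    then have "dist (x 0) E < e" using x0 by linarith
    then obtain t1 where t1: "t1 \<in> {0..T}" "dist (x t1) E = e" "\<forall>s\<in>{0..t1}. dist (x s) E \<le> e"
      using first_exit[OF dc _ t] by auto
    have sol1: "is_solution_on F x t1" by (rule sol_restrict[OF sol]) (use t1 in auto)
    have "V (x t1) \<le> V (x 0) * exp (0 * t1)"
    proof (rule exp_compare_le[OF vderiv[OF sol1]])
      show "\<forall>s\<in>{0..t1}. 2 * Gf (x s) \<le> 0 * V (x s)"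
      proof
        fix s assume "s \<in> {0..t1}"
        then have "dist (x s) E \<le> \<rho>" using t1 e by force
        moreover have "k * V (x s) \<ge> 0" using kpos V0[of "x s"] by simp
        ultimately show "2 * Gf (x s) \<le> 0 * V (x s)" using vbound[of "x s"] by simp
      qed
    qed (use t1 in auto)
    then have "V (x t1) \<le> V (x 0)" by simp
    moreover have "Wmin * e^2 \<le> V (x t1)" using Vlow[of "x t1"] t1 by simp
    moreover have "V (x 0) \<le> Wmax * (dist (x 0) E)^2" by (rule Vup)
    moreover have "Wmax * (dist (x 0) E)^2 \<le> Wmax * (e * Wmin / (2 * Wmax))^2"
      using x0 Wm by (intro mult_left_mono power_mono) auto
    moreover have "Wmax * (e * Wmin / (2 * Wmax))^2 < Wmin * e^2"
    proof -
      have "Wmax * (e * Wmin / (2 * Wmax))^2 = Wmin * e^2 * (Wmin / Wmax) / 4"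
        using Wm by (simp add: field_simps power2_eq_square)
      also have "\<dots> \<le> Wmin * e^2 * 1 / 4"
        using Wm e by (intro divide_right_mono mult_left_mono) auto
      also have "\<dots> < Wmin * e^2" using Wm e by simp
      finally show ?thesis .
    qed
    ultimately show False by linarith
  qed
  have LS: "lyapunov_stable F E"
    unfolding lyapunov_stable_def
  proof (intro allI impI)
    fix \<epsilon> :: real assume ep: "\<epsilon> > 0"
    define e where "e = min \<epsilon> \<rho>"
    have e: "0 < e" "e \<le> \<rho>" "e \<le> \<epsilon>" using ep W by (auto simp: e_def)
    show "\<exists>\<delta>>0. \<forall>x T. T \<ge> 0 \<and> is_solution_on F x T \<and> dist (x 0) E < \<delta> \<longrightarrow> (\<forall>t\<in>{0..T}. dist (x t) E < \<epsilon>)"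
    proof (intro exI[of _ "e * Wmin / (2 * Wmax)"] conjI allI impI)
      show "e * Wmin / (2 * Wmax) > 0" using e Wm by simp
      fix x T assume H: "T \<ge> 0 \<and> is_solution_on F x T \<and> dist (x 0) E < e * Wmin / (2 * Wmax)"
      then have "\<forall>t\<in>{0..T}. dist (x t) E < e" using stab[OF e(1,2)] by blast
      then show "\<forall>t\<in>{0..T}. dist (x t) E < \<epsilon>" using e by force
    qed
  qed
  have LA: "locally_attracting F E"
    unfolding locally_attracting_def
  proof (intro exI[of _ "\<rho> * Wmin / (2 * Wmax)"] conjI allI impI)
    show "\<rho> * Wmin / (2 * Wmax) > 0" using W Wm by simp
    fix x assume H: "(\<forall>T\<ge>0. is_solution_on F x T) \<and> dist (x 0) E < \<rho> * Wmin / (2 * Wmax)"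
    define B where "B = V (x 0) / Wmin"
    have B0: "B \<ge> 0" using V0 Wm by (simp add: B_def)
    have dbound: "(dist (x t) E)^2 \<le> B / (1 + k * t)" if t: "t \<ge> 0" for t
    proof -
      have sol: "is_solution_on F x t" using H t by blast
      have inb: "\<forall>s\<in>{0..t}. dist (x s) E < \<rho>" using stab[OF W(4) order_refl t sol] H by blast
      have "V (x t) \<le> V (x 0) * exp (- k * t)"
      proof (rule exp_compare_le[OF vderiv[OF sol]])
        show "\<forall>s\<in>{0..t}. 2 * Gf (x s) \<le> - k * V (x s)"
          using vbound inb by (simp add: less_imp_le)
      qed (use t in auto)
      also have "\<dots> \<le> V (x 0) / (1 + k * t)"
      proof -
        have pos1: "1 + k * t > 0" using kpos t by (simp add: add_pos_nonneg)
        have "exp (k * t) \<ge> 1 + k * t" by (rule exp_ge_add_one_self)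
        have e1: "exp (- k * t) = 1 / exp (k * t)" by (simp add: exp_minus divide_inverse)
        have "1 / exp (k * t) \<le> 1 / (1 + k * t)"
          using pos1 \<open>exp (k * t) \<ge> 1 + k * t\<close> by (intro divide_left_mono) auto
        then have "exp (- k * t) \<le> 1 / (1 + k * t)" unfolding e1 .
        then show ?thesis using V0[of "x 0"] by (simp add: mult_left_mono divide_inverse)
      qed
      finally have "V (x t) \<le> V (x 0) / (1 + k * t)" .
      moreover have "Wmin * (dist (x t) E)^2 \<le> V (x t)" by (rule Vlow)
      ultimately have "Wmin * (dist (x t) E)^2 \<le> V (x 0) / (1 + k * t)" by linarith
      then have "(dist (x t) E)^2 * Wmin \<le> V (x 0) / (1 + k * t)" by (simp add: mult.commute)
      then have "(dist (x t) E)^2 \<le> (V (x 0) / (1 + k * t)) / Wmin" by (simp only: pos_le_divide_eq[OF Wm(1)])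
      then show ?thesis unfolding B_def by (simp add: mult.commute)
    qed
    show "(x \<longlongrightarrow> E) at_top"
      unfolding tendsto_iff
    proof (intro allI impI)
      fix e :: real assume e: "e > 0"
      show "\<forall>\<^sub>F t in at_top. dist (x t) E < e"
        unfolding eventually_at_top_linorder
      proof (intro exI[of _ "B / (k * e^2) + 1"] allI impI)
        fix t assume t: "t \<ge> B / (k * e^2) + 1"
        have "B / (k * e^2) \<ge> 0" using B0 kpos e by simp
        then have t0: "t \<ge> 0" using t by linarith
        have pos1: "1 + k * t > 0" using kpos t0 by (simp add: add_pos_nonneg)
        have "k * e^2 * t \<ge> k * e^2 * (B / (k * e^2) + 1)" using t kpos e by (intro mult_left_mono) auto
        moreover have "k * e^2 * (B / (k * e^2) + 1) = B + k * e^2" using kpos e by (simp add: field_simps)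
        ultimately have "k * e^2 * t \<ge> B + k * e^2" by simp
        moreover have "e^2 * (1 + k * t) = e^2 + k * e^2 * t" by (simp add: algebra_simps)
        moreover have "k * e^2 > 0" using kpos e by simp
        moreover have "e^2 > 0" using e by simp
        ultimately have "B < e^2 * (1 + k * t)" by linarith
        then have "B / (1 + k * t) < e^2" using pos1 by (simp add: pos_divide_less_eq)
        then have "(dist (x t) E)^2 < e^2" using dbound[OF t0] by linarith
        then show "dist (x t) E < e" using e by (simp add: power_less_imp_less_base)
      qed
    qed
  qed
  show ?thesis using LS LA unfolding locally_asymptotically_stable_def F_def E_def by blast
qed

theorem theorem3:
  fixes r K \<alpha> \<phi> c m1 m2 lam a d \<delta> \<gamma> \<sigma> \<eta> :: real
  assumes pos: "r > 0" "K > 0" "\<alpha> > 0" "\<phi> > 0" "c > 0" "m1 > 0" "m2 > 0" "lam > 0"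
               "a > 0" "d > 0" "\<delta> > 0" "\<gamma> > 0" "\<sigma> > 0" "\<eta> > 0"
      and "\<phi> < 1" and "m1 > m2"
  defines "F \<equiv> pest_field r K \<alpha> \<phi> c m1 m2 lam a d \<delta> \<gamma> \<sigma> \<eta>"
      and "E1 \<equiv> (vector [K, 0, 0, \<gamma> / \<eta>] :: real^4)"
  shows "(m1 * \<alpha> * K / (c + K) < lam * \<gamma> / (a * \<eta> + \<gamma>) + d \<and> m2 * \<phi> * \<alpha> * K / (c + K) < d + \<delta>
            \<longrightarrow> locally_asymptotically_stable F E1)
       \<and> (m1 * \<alpha> * K / (c + K) > lam * \<gamma> / (a * \<eta> + \<gamma>) + d \<or> m2 * \<phi> * \<alpha> * K / (c + K) > d + \<delta>
            \<longrightarrow> unstable_equilibrium F E1)"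
  using pest_stable[OF pos] pest_unstable[OF pos]
  unfolding F_def E1_def by blast

end
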